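(* Let $H$ be a Hilbert space and let $A_1,\dots,A_n$ and $B_1,\dots,B_n$ be strictly positive bounded operators on $H$ with $\sum_{j=1}^n A_j=\sum_{j=1}^n B_j=I$. Then, in the operator order, $$\sum_{j=1}^n S_{-2}(A_j|B_j)\le \sum_{j=1}^n A_jB_j^{-1}A_j-\sum_{j=1}^n A_jB_j^{-1}A_jB_j^{-1}A_j\le \sum_{j=1}^n S_{-1}(A_j|B_j)\le I-\sum_{j=1}^n A_jB_j^{-1}A_j$$ $$\le \sum_{j=1}^n S_0(A_j|B_j)\le 0\le \sum_{j=1}^n S_1(A_j|B_j)\le \sum_{j=1}^n B_jA_j^{-1}B_j-I\le \sum_{j=1}^n S_2(A_j|B_j).$$
   Context: A bounded operator $T$ on $H$ is strictly positive ($T>0$) if $(Tx,x)\ge0$ for all $x$ and $T$ is invertible; $X\le Y$ means $((Y-X)x,x)\ge 0$ for all $x$. $I$ is the identity. Powers and $\log$ of strictly positive operators are defined by functional calculus. For $A>0$, $B>0$ and $\nu\in\mathbb{R}$, the generalized relative operator entropy is $S_\nu(A|B)=A^{1/2}(A^{-1/2}BA^{-1/2})^{\nu}(\log A^{-1/2}BA^{-1/2})A^{1/2}$; in particular $S_0(A|B)=A^{1/2}(\log A^{-1/2}BA^{-1/2})A^{1/2}$ is the relative operator entropy. *)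

theory Defs
  imports "HOL-Analysis.Analysis"
begin

definition opow :: "nat \<Rightarrow> ('a::real_normed_vector \<Rightarrow>\<^sub>L 'a) \<Rightarrow> ('a \<Rightarrow>\<^sub>L 'a)" where
  "opow k T = ((\<lambda>S. T o\<^sub>L S) ^^ k) id_blinfun"

definition op_le :: "('a::real_inner \<Rightarrow>\<^sub>L 'a) \<Rightarrow> ('a \<Rightarrow>\<^sub>L 'a) \<Rightarrow> bool" where
  "op_le X Y \<longleftrightarrow> (\<forall>x. 0 \<le> inner ((Y - X) x) x)"

definition op_invertible :: "('a::real_normed_vector \<Rightarrow>\<^sub>L 'a) \<Rightarrow> bool" where
  "op_invertible T \<longleftrightarrow> (\<exists>S. S o\<^sub>L T = id_blinfun \<and> T o\<^sub>L S = id_blinfun)"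

definition op_inv :: "('a::real_normed_vector \<Rightarrow>\<^sub>L 'a) \<Rightarrow> ('a \<Rightarrow>\<^sub>L 'a)" where
  "op_inv T = (SOME S. S o\<^sub>L T = id_blinfun \<and> T o\<^sub>L S = id_blinfun)"

(* Strictly positive operator (T > 0): (Tx,x) \<ge> 0 for all x and T invertible.
  On a real Hilbert space, self-adjointness (automatic in the complex case) is
  made explicit. *)
definition strictly_pos :: "('a::real_inner \<Rightarrow>\<^sub>L 'a) \<Rightarrow> bool" where
  "strictly_pos T \<longleftrightarrow>
     (\<forall>x y. inner (T x) y = inner x (T y)) \<and>
     (\<forall>x. 0 \<le> inner (T x) x) \<and> op_invertible T"

(* Functional calculus for strictly positive T: with M = norm T, the spectrum of
  T lies in [m, M] with m > 0, so X = I - T/M has norm < 1 and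
  log T = (ln M) I + log (I - X) = (ln M) I - \<Sum>_{k\<ge>1} X^k / k. *)
definition op_log :: "('a::{real_inner,complete_space} \<Rightarrow>\<^sub>L 'a) \<Rightarrow> ('a \<Rightarrow>\<^sub>L 'a)" where
  "op_log T = ln (norm T) *\<^sub>R id_blinfun
     - (\<Sum>k. (1 / real (Suc k)) *\<^sub>R opow (Suc k) (id_blinfun - (1 / norm T) *\<^sub>R T))"

definition op_powr :: "('a::{real_inner,complete_space} \<Rightarrow>\<^sub>L 'a) \<Rightarrow> real \<Rightarrow> ('a \<Rightarrow>\<^sub>L 'a)" where
  "op_powr T \<nu> = (\<Sum>k. (\<nu> ^ k / fact k) *\<^sub>R opow k (op_log T))"

definition gen_rel_entropy ::
  "real \<Rightarrow> ('a::{real_inner,complete_space} \<Rightarrow>\<^sub>L 'a) \<Rightarrow> ('a \<Rightarrow>\<^sub>L 'a) \<Rightarrow> ('a \<Rightarrow>\<^sub>L 'a)" where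
  "gen_rel_entropy \<nu> A B =
     (let C = op_powr A (-1/2) o\<^sub>L B o\<^sub>L op_powr A (-1/2)
      in op_powr A (1/2) o\<^sub>L op_powr C \<nu> o\<^sub>L op_log C o\<^sub>L op_powr A (1/2))"

end

theory Submission
  imports Defs
begin


typedef (overloaded) 'a W = "UNIV :: (('a::real_normed_vector \<Rightarrow>\<^sub>L 'a) \<times> real) set" by simp
setup_lifting type_definition_W

lemma blinfun_compose_assoc': "(a o\<^sub>L b) o\<^sub>L c = a o\<^sub>L (b o\<^sub>L c)"
  by (rule blinfun_eqI) simp
lemma blinfun_compose_add_left': "(a + b) o\<^sub>L c = (a o\<^sub>L c) + (b o\<^sub>L c)"
  by (rule blinfun_eqI) (simp add: blinfun.add_left)
lemma blinfun_compose_add_right': "c o\<^sub>L (a + b) = (c o\<^sub>L a) + (c o\<^sub>L b)"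
  by (rule blinfun_eqI) (simp add: blinfun.add_left blinfun.add_right)
lemma blinfun_compose_diff_left': "(a - b) o\<^sub>L c = (a o\<^sub>L c) - (b o\<^sub>L c)"
  by (rule blinfun_eqI) (simp add: blinfun.diff_left)
lemma blinfun_compose_diff_right': "c o\<^sub>L (a - b) = (c o\<^sub>L a) - (c o\<^sub>L b)"
  by (rule blinfun_eqI) (simp add: blinfun.diff_left blinfun.diff_right)
lemma blinfun_compose_scaleR_left': "(r *\<^sub>R a) o\<^sub>L c = r *\<^sub>R (a o\<^sub>L c)"
  by (rule blinfun_eqI) (simp add: blinfun.scaleR_left)
lemma blinfun_compose_scaleR_right': "c o\<^sub>L (r *\<^sub>R a) = r *\<^sub>R (c o\<^sub>L a)"
  by (rule blinfun_eqI) (simp add: blinfun.scaleR_left blinfun.scaleR_right)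
lemma blinfun_compose_id_left': "id_blinfun o\<^sub>L a = a"
  by (rule blinfun_eqI) simp
lemma blinfun_compose_id_right': "a o\<^sub>L id_blinfun = a"
  by (rule blinfun_eqI) simp
lemma norm_id_blinfun_le: "norm (id_blinfun :: 'a::real_normed_vector \<Rightarrow>\<^sub>L 'a) \<le> 1"
  by (rule norm_blinfun_bound) auto

lemmas bc_simps = blinfun_compose_assoc' blinfun_compose_add_left' blinfun_compose_add_right'
  blinfun_compose_diff_left' blinfun_compose_diff_right' blinfun_compose_scaleR_left'
  blinfun_compose_scaleR_right' blinfun_compose_id_left' blinfun_compose_id_right'

instantiation W :: (real_normed_vector) real_normed_algebra_1
begin
lift_definition zero_W :: "'a W" is "0" .
lift_definition one_W :: "'a W" is "(id_blinfun, 1)" .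
lift_definition plus_W :: "'a W \<Rightarrow> 'a W \<Rightarrow> 'a W" is "(+)" .
lift_definition minus_W :: "'a W \<Rightarrow> 'a W \<Rightarrow> 'a W" is "(-)" .
lift_definition uminus_W :: "'a W \<Rightarrow> 'a W" is "uminus" .
lift_definition scaleR_W :: "real \<Rightarrow> 'a W \<Rightarrow> 'a W" is "scaleR" .
lift_definition times_W :: "'a W \<Rightarrow> 'a W \<Rightarrow> 'a W" is "\<lambda>a b. (fst a o\<^sub>L fst b, snd a * snd b)" .
lift_definition norm_W :: "'a W \<Rightarrow> real" is "\<lambda>a. max (norm (fst a)) \<bar>snd a\<bar>" .
definition dist_W :: "'a W \<Rightarrow> 'a W \<Rightarrow> real" where "dist_W a b = norm (a - b)"
definition sgn_W :: "'a W \<Rightarrow> 'a W" where "sgn_W x = scaleR (inverse (norm x)) x"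
definition uniformity_W :: "('a W \<times> 'a W) filter" where
  "uniformity_W = (INF e\<in>{0 <..}. principal {(x, y). dist x y < e})"
definition open_W :: "'a W set \<Rightarrow> bool" where
  "open_W S = (\<forall>x\<in>S. \<forall>\<^sub>F (x', y) in uniformity. x' = x \<longrightarrow> y \<in> S)"
instance
proof
  fix a b c :: "'a W" and r s :: real
  show "a + b + c = a + (b + c)" by transfer (simp add: algebra_simps)
  show "a + b = b + a" by transfer (simp add: algebra_simps)
  show "0 + a = a" by transfer simp
  show "- a + a = 0" by transfer simp
  show "a - b = a + - b" by transfer simp
  show "r *\<^sub>R (a + b) = r *\<^sub>R a + r *\<^sub>R b" by transfer (simp add: algebra_simps)
  show "(r + s) *\<^sub>R a = r *\<^sub>R a + s *\<^sub>R a" by transfer (simp add: algebra_simps)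
  show "r *\<^sub>R s *\<^sub>R a = (r * s) *\<^sub>R a" by transfer simp
  show "1 *\<^sub>R a = a" by transfer simp
  show "a * b * c = a * (b * c)" by transfer (simp add: bc_simps)
  show "(a + b) * c = a * c + b * c" by transfer (simp add: bc_simps algebra_simps)
  show "a * (b + c) = a * b + a * c" by transfer (simp add: bc_simps algebra_simps)
  show "r *\<^sub>R a * b = r *\<^sub>R (a * b)" by transfer (simp add: bc_simps)
  show "a * r *\<^sub>R b = r *\<^sub>R (a * b)" by transfer (simp add: bc_simps)
  show "1 * a = a" by transfer (simp add: bc_simps)
  show "a * 1 = a" by transfer (simp add: bc_simps)
  show "(0::'a W) \<noteq> 1" by transfer (simp add: prod_eq_iff)
  show "dist a b = norm (a - b)" by (simp add: dist_W_def)
  show "sgn a = inverse (norm a) *\<^sub>R a" by (simp add: sgn_W_def)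
  show "(uniformity :: ('a W \<times> 'a W) filter) = (INF e\<in>{0 <..}. principal {(x, y). dist x y < e})"
    by (simp add: uniformity_W_def)
  show "norm a = 0 \<longleftrightarrow> a = 0" by transfer (smt (verit, ccfv_threshold) abs_ge_zero abs_zero fst_zero max_def norm_eq_zero norm_ge_zero prod_eq_iff snd_zero)
  show "norm (a + b) \<le> norm a + norm b"
    by transfer (auto simp: max_def intro: order_trans[OF norm_triangle_ineq])
  show "norm (r *\<^sub>R a) = \<bar>r\<bar> * norm a" by transfer (simp add: abs_mult max_mult_distrib_left)
  show "norm (a * b) \<le> norm a * norm b"
    by transfer (auto simp: abs_mult intro!: order_trans[OF norm_blinfun_compose] mult_mono)
  show "norm (1::'a W) = 1" by transfer (simp add: norm_id_blinfun_le)
next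
  fix U :: "'a W set"
  show "open U = (\<forall>x\<in>U. \<forall>\<^sub>F (x', y) in uniformity. x' = x \<longrightarrow> y \<in> U)"
    by (simp add: open_W_def)
qed
end

definition pr :: "'a::real_normed_vector W \<Rightarrow> 'a \<Rightarrow>\<^sub>L 'a" where "pr w = fst (Rep_W w)"
definition sc :: "'a::real_normed_vector W \<Rightarrow> real" where "sc w = snd (Rep_W w)"
definition mk :: "('a::real_normed_vector \<Rightarrow>\<^sub>L 'a) \<Rightarrow> real \<Rightarrow> 'a W" where "mk T c = Abs_W (T, c)"

lemmas W_rep_eqs = plus_W.rep_eq minus_W.rep_eq uminus_W.rep_eq zero_W.rep_eq one_W.rep_eq
  scaleR_W.rep_eq times_W.rep_eq norm_W.rep_eq

lemma norm_W: "norm w = max (norm (pr w)) \<bar>sc w\<bar>" by (simp add: W_rep_eqs pr_def sc_def)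
lemma pr_add[simp]: "pr (a + b) = pr a + pr b" by (simp add: W_rep_eqs pr_def)
lemma pr_diff[simp]: "pr (a - b) = pr a - pr b" by (simp add: W_rep_eqs pr_def)
lemma pr_uminus[simp]: "pr (- b) = - pr b" by (simp add: W_rep_eqs pr_def)
lemma pr_zero[simp]: "pr 0 = 0" by (simp add: W_rep_eqs pr_def)
lemma pr_one[simp]: "pr 1 = id_blinfun" by (simp add: W_rep_eqs pr_def)
lemma pr_scaleR[simp]: "pr (r *\<^sub>R a) = r *\<^sub>R pr a" by (simp add: W_rep_eqs pr_def)
lemma pr_mult[simp]: "pr (a * b) = pr a o\<^sub>L pr b" by (simp add: W_rep_eqs pr_def)
lemma sc_add[simp]: "sc (a + b) = sc a + sc b" by (simp add: W_rep_eqs sc_def)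
lemma sc_diff[simp]: "sc (a - b) = sc a - sc b" by (simp add: W_rep_eqs sc_def)
lemma pr_mk[simp]: "pr (mk T c) = T" by (simp add: pr_def mk_def Abs_W_inverse)
lemma sc_mk[simp]: "sc (mk T c) = c" by (simp add: sc_def mk_def Abs_W_inverse)
lemma norm_pr_le: "norm (pr w) \<le> norm w" by (simp add: norm_W)
lemma norm_sc_le: "\<bar>sc w\<bar> \<le> norm w" by (simp add: norm_W)
lemma W_eqI: "pr a = pr b \<Longrightarrow> sc a = sc b \<Longrightarrow> a = b"
  unfolding pr_def sc_def Rep_W_inject[symmetric] prod_eq_iff by simp

lemma blinfun_Cauchy_convergent:
  fixes X :: "nat \<Rightarrow> 'a::real_normed_vector \<Rightarrow>\<^sub>L 'b::{real_normed_vector,complete_space}"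
  assumes "Cauchy X"
  shows "convergent X"
proof -
  {
    fix x::'a
    {
      fix x::'a
      assume "norm x \<le> 1"
      have "Cauchy (\<lambda>n. X n x)"
      proof (rule CauchyI)
        fix e::real
        assume "0 < e"
        from CauchyD[OF \<open>Cauchy X\<close> \<open>0 < e\<close>] obtain M
          where M: "\<And>m n. m \<ge> M \<Longrightarrow> n \<ge> M \<Longrightarrow> norm (X m - X n) < e"
          by auto
        show "\<exists>M. \<forall>m\<ge>M. \<forall>n\<ge>M. norm (X m x - X n x) < e"
        proof (safe intro!: exI[where x=M])
          fix m n
          assume le: "M \<le> m" "M \<le> n"
          have "norm (X m x - X n x) = norm ((X m - X n) x)"
            by (simp add: blinfun.bilinear_simps)
          also have "\<dots> \<le> norm (X m - X n) * norm x"
             by (rule norm_blinfun)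
          also have "\<dots> \<le> norm (X m - X n) * 1"
            using \<open>norm x \<le> 1\<close> norm_ge_zero by (rule mult_left_mono)
          also have "\<dots> = norm (X m - X n)" by simp
          also have "\<dots> < e" using le by fact
          finally show "norm (X m x - X n x) < e" .
        qed
      qed
      hence "convergent (\<lambda>n. X n x)"
        by (metis Cauchy_convergent_iff)
    } note convergent_norm1 = this
    define y where "y = x /\<^sub>R norm x"
    have y: "norm y \<le> 1" and xy: "x = norm x *\<^sub>R y"
      by (simp_all add: y_def inverse_eq_divide)
    have "convergent (\<lambda>n. norm x *\<^sub>R X n y)"
      by (intro bounded_bilinear.convergent[OF bounded_bilinear_scaleR] convergent_const
        convergent_norm1 y)
    also have "(\<lambda>n. norm x *\<^sub>R X n y) = (\<lambda>n. X n x)"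
      by (subst xy) (simp add: blinfun.bilinear_simps)
    finally have "convergent (\<lambda>n. X n x)" .
  }
  then obtain v where v: "\<And>x. (\<lambda>n. X n x) \<longlonglongrightarrow> v x"
    unfolding convergent_def
    by metis

  have "Cauchy (\<lambda>n. norm (X n))"
  proof (rule CauchyI)
    fix e::real
    assume "e > 0"
    from CauchyD[OF \<open>Cauchy X\<close> \<open>0 < e\<close>] obtain M
      where M: "\<And>m n. m \<ge> M \<Longrightarrow> n \<ge> M \<Longrightarrow> norm (X m - X n) < e"
      by auto
    show "\<exists>M. \<forall>m\<ge>M. \<forall>n\<ge>M. norm (norm (X m) - norm (X n)) < e"
    proof (safe intro!: exI[where x=M])
      fix m n assume mn: "m \<ge> M" "n \<ge> M"
      have "norm (norm (X m) - norm (X n)) \<le> norm (X m - X n)"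
        by (metis norm_triangle_ineq3 real_norm_def)
      also have "\<dots> < e" using mn by fact
      finally show "norm (norm (X m) - norm (X n)) < e" .
    qed
  qed
  then obtain K where K: "(\<lambda>n. norm (X n)) \<longlonglongrightarrow> K"
    unfolding Cauchy_convergent_iff convergent_def
    by metis

  have "bounded_linear v"
  proof
    fix x y and r::real
    from tendsto_add[OF v[of x] v [of y]] v[of "x + y", unfolded blinfun.bilinear_simps]
      tendsto_scaleR[OF tendsto_const[of r] v[of x]] v[of "r *\<^sub>R x", unfolded blinfun.bilinear_simps]
    show "v (x + y) = v x + v y" "v (r *\<^sub>R x) = r *\<^sub>R v x"
      by (metis (poly_guards_query) LIMSEQ_unique)+
    show "\<exists>K. \<forall>x. norm (v x) \<le> norm x * K"
    proof (safe intro!: exI[where x=K])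
      fix x
      have "norm (v x) \<le> K * norm x"
        by (rule tendsto_le[OF _ tendsto_mult[OF K tendsto_const] tendsto_norm[OF v]])
          (auto simp: norm_blinfun)
      thus "norm (v x) \<le> norm x * K"
        by (simp add: ac_simps)
    qed
  qed
  hence Bv: "\<And>x. (\<lambda>n. X n x) \<longlonglongrightarrow> Blinfun v x"
    by (auto simp: bounded_linear_Blinfun_apply v)

  have "X \<longlonglongrightarrow> Blinfun v"
  proof (rule LIMSEQ_I)
    fix r::real assume "r > 0"
    define r' where "r' = r / 2"
    have "0 < r'" "r' < r" using \<open>r > 0\<close> by (simp_all add: r'_def)
    from CauchyD[OF \<open>Cauchy X\<close> \<open>r' > 0\<close>]
    obtain M where M: "\<And>m n. m \<ge> M \<Longrightarrow> n \<ge> M \<Longrightarrow> norm (X m - X n) < r'"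
      by metis
    show "\<exists>no. \<forall>n\<ge>no. norm (X n - Blinfun v) < r"
    proof (safe intro!: exI[where x=M])
      fix n assume n: "M \<le> n"
      have "norm (X n - Blinfun v) \<le> r'"
      proof (rule norm_blinfun_bound)
        fix x
        have "eventually (\<lambda>m. m \<ge> M) sequentially"
          by (metis eventually_ge_at_top)
        hence ev_le: "eventually (\<lambda>m. norm (X n x - X m x) \<le> r' * norm x) sequentially"
        proof eventually_elim
          case (elim m)
          have "norm (X n x - X m x) = norm ((X n - X m) x)"
            by (simp add: blinfun.bilinear_simps)
          also have "\<dots> \<le> norm ((X n - X m)) * norm x"
            by (rule norm_blinfun)
          also have "\<dots> \<le> r' * norm x"
            using M[OF n elim] by (simp add: mult_right_mono)
          finally show ?case .
        qed
        have tendsto_v: "(\<lambda>m. norm (X n x - X m x)) \<longlonglongrightarrow> norm (X n x - Blinfun v x)"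
          by (auto intro!: tendsto_intros Bv)
        show "norm ((X n - Blinfun v) x) \<le> r' * norm x"
          by (auto intro!: tendsto_upperbound tendsto_v ev_le simp: blinfun.bilinear_simps)
      qed (simp add: \<open>0 < r'\<close> less_imp_le)
      thus "norm (X n - Blinfun v) < r"
        by (metis \<open>r' < r\<close> le_less_trans)
    qed
  qed
  thus "convergent X"
    by (rule convergentI)
qed

lemma bounded_linear_pr: "bounded_linear pr"
  by (rule bounded_linear_intro[where K=1]) (auto simp: norm_pr_le)

instance W :: ("{real_normed_vector,complete_space}") banach
proof
  fix X :: "nat \<Rightarrow> 'a W"
  assume C: "Cauchy X"
  have C1: "Cauchy (\<lambda>n. pr (X n))"
    unfolding Cauchy_iff
  proof (intro allI impI)
    fix e :: real assume "0 < e"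
    then obtain M where M: "\<forall>m\<ge>M. \<forall>n\<ge>M. norm (X m - X n) < e" using C unfolding Cauchy_iff by blast
    show "\<exists>M. \<forall>m\<ge>M. \<forall>n\<ge>M. norm (pr (X m) - pr (X n)) < e"
    proof (intro exI allI impI)
      fix m n assume "M \<le> m" "M \<le> n"
      then have "norm (X m - X n) < e" using M by blast
      then show "norm (pr (X m) - pr (X n)) < e" using norm_pr_le[of "X m - X n"] by simp
    qed
  qed
  have C2: "Cauchy (\<lambda>n. sc (X n))"
    unfolding Cauchy_iff
  proof (intro allI impI)
    fix e :: real assume "0 < e"
    then obtain M where M: "\<forall>m\<ge>M. \<forall>n\<ge>M. norm (X m - X n) < e" using C unfolding Cauchy_iff by blast
    show "\<exists>M. \<forall>m\<ge>M. \<forall>n\<ge>M. norm (sc (X m) - sc (X n)) < e"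
    proof (intro exI allI impI)
      fix m n assume "M \<le> m" "M \<le> n"
      then have "norm (X m - X n) < e" using M by blast
      then show "norm (sc (X m) - sc (X n)) < e" using norm_sc_le[of "X m - X n"] by simp
    qed
  qed
  from C1 have "convergent (\<lambda>n. pr (X n))" by (rule blinfun_Cauchy_convergent)
  then obtain L1 where L1: "(\<lambda>n. pr (X n)) \<longlonglongrightarrow> L1" unfolding convergent_def by blast
  from C2 have "convergent (\<lambda>n. sc (X n))" by (rule Cauchy_convergent)
  then obtain L2 where L2: "(\<lambda>n. sc (X n)) \<longlonglongrightarrow> L2" unfolding convergent_def by blast
  have "X \<longlonglongrightarrow> mk L1 L2"
    unfolding LIMSEQ_iff
  proof (intro allI impI)
    fix r :: real assume r: "0 < r"
    obtain n1 where n1: "\<forall>n\<ge>n1. norm (pr (X n) - L1) < r" using L1 r unfolding LIMSEQ_iff by blast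
    obtain n2 where n2: "\<forall>n\<ge>n2. norm (sc (X n) - L2) < r" using L2 r unfolding LIMSEQ_iff by blast
    show "\<exists>no. \<forall>n\<ge>no. norm (X n - mk L1 L2) < r"
    proof (intro exI[of _ "max n1 n2"] allI impI)
      fix n assume "max n1 n2 \<le> n"
      then have a: "norm (pr (X n) - L1) < r" and b: "\<bar>sc (X n) - L2\<bar> < r" using n1 n2 by auto
      have "norm (X n - mk L1 L2) = max (norm (pr (X n) - L1)) \<bar>sc (X n) - L2\<bar>"
        by (simp add: norm_W)
      then show "norm (X n - mk L1 L2) < r" using a b by simp
    qed
  qed
  then show "convergent X" by (auto simp: convergent_def)
qed




lemma norm_scaled_power_le:
  fixes d :: "'b::{real_normed_algebra_1}"
  assumes "c \<ge> 0"
  shows "norm (c *\<^sub>R d ^ k) \<le> c * norm d ^ k"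
proof -
  have "norm (d ^ k) \<le> norm d ^ k" by (rule norm_power_ineq)
  then show ?thesis using assms by (simp add: mult_left_mono)
qed

lemma exp_rem_bound:
  fixes d :: "'b::{real_normed_algebra_1,banach}"
  assumes "norm d \<le> 1"
  shows "norm (exp d - 1 - d) \<le> norm d ^ 2"
proof -
  have s1: "summable (\<lambda>n. inverse (fact (n + 2)) * norm d ^ (n + 2))"
    using summable_ignore_initial_segment[OF summable_exp_generic[of "norm d"], of 2]
    by (simp add: divide_inverse mult.commute)
  have s2: "summable (\<lambda>n. norm (inverse (fact (n + 2)) *\<^sub>R d ^ (n + 2)))"
  proof (rule summable_comparison_test'[OF s1, of 0])
    fix n :: nat
    show "norm (norm (inverse (fact (n + 2)) *\<^sub>R d ^ (n + 2))) \<le> inverse (fact (n + 2)) * norm d ^ (n + 2)"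
      using norm_scaled_power_le[of "inverse (fact (n+2))" d "n+2"] by simp
  qed
  have "norm (exp d - 1 - d) = norm (\<Sum>n. inverse (fact (n + 2)) *\<^sub>R d ^ (n + 2))"
    by (subst exp_first_two_terms) simp
  also have "\<dots> \<le> (\<Sum>n. norm (inverse (fact (n + 2)) *\<^sub>R d ^ (n + 2)))"
    by (rule summable_norm[OF s2])
  also have "\<dots> \<le> (\<Sum>n. inverse (fact (n + 2)) * norm d ^ (n + 2))"
  proof (rule suminf_le[OF _ s2 s1])
    fix n :: nat
    show "norm (inverse (fact (n + 2)) *\<^sub>R d ^ (n + 2)) \<le> inverse (fact (n + 2)) * norm d ^ (n + 2)"
      using norm_scaled_power_le[of "inverse (fact (n+2))" d "n+2"] by simp
  qed
  also have "\<dots> = exp (norm d) - 1 - norm d"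
    using exp_first_two_terms[of "norm d"] by simp
  also have "\<dots> \<le> norm d ^ 2"
    using exp_bound[of "norm d"] assms by simp
  finally show ?thesis .
qed

lemma exp_chain_commuting:
  fixes F :: "real \<Rightarrow> 'b::{real_normed_algebra_1,banach}"
  assumes der: "(F has_vector_derivative D) (at t within S)"
    and comm: "\<And>s. s \<in> S \<Longrightarrow> F s * F t = F t * F s" and tS: "t \<in> S"
  shows "((\<lambda>s. exp (F s)) has_vector_derivative exp (F t) * D) (at t within S)"
proof -
  define E where "E s = exp (F s - F t)" for s
  have "(E has_derivative (\<lambda>h. h *\<^sub>R D)) (at t within S)"
    unfolding has_derivative_iff_norm
  proof (intro conjI)
    show "bounded_linear (\<lambda>h. h *\<^sub>R D)" by (rule bounded_linear_scaleR_left)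
    define q where "q s = norm (F s - F t - (s - t) *\<^sub>R D) / norm (s - t)" for s
    have q0: "(q \<longlongrightarrow> 0) (at t within S)"
      using der unfolding has_vector_derivative_def has_derivative_iff_norm q_def by simp
    have cont: "((\<lambda>s. F s - F t) \<longlongrightarrow> 0) (at t within S)"
      using has_vector_derivative_continuous[OF der] unfolding continuous_within
      by (simp add: Lim_null[symmetric])
    then have nd0: "((\<lambda>s. norm (F s - F t)) \<longlongrightarrow> 0) (at t within S)"
      by (simp add: tendsto_norm_zero)
    have ev1: "\<forall>\<^sub>F s in at t within S. norm (F s - F t) \<le> 1"
      using order_tendstoD(2)[OF nd0, of 1] by (auto elim: eventually_mono)
    have ev2: "\<forall>\<^sub>F s in at t within S. s \<noteq> t"
      by (simp add: eventually_at_filter)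
    define u where "u s = norm (F s - F t) * (q s + norm D) + q s" for s
    have u0: "(u \<longlongrightarrow> 0) (at t within S)"
      unfolding u_def using tendsto_add[OF tendsto_mult[OF nd0 tendsto_add[OF q0 tendsto_const]] q0, of "norm D"]
      by simp
    show "((\<lambda>y. norm (E y - E t - (y - t) *\<^sub>R D) / norm (y - t)) \<longlongrightarrow> 0) (at t within S)"
    proof (rule tendsto_sandwich[OF _ _ tendsto_const u0])
      show "\<forall>\<^sub>F n in at t within S. 0 \<le> norm (E n - E t - (n - t) *\<^sub>R D) / norm (n - t)"
        by simp
      show "\<forall>\<^sub>F n in at t within S. norm (E n - E t - (n - t) *\<^sub>R D) / norm (n - t) \<le> u n"
        using ev1 ev2
      proof eventually_elim
        case (elim s)
        let ?d = "F s - F t"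
        have st: "norm (s - t) > 0" using elim by simp
        have "E s - E t - (s - t) *\<^sub>R D = (exp ?d - 1 - ?d) + (?d - (s - t) *\<^sub>R D)"
          by (simp add: E_def)
        then have "norm (E s - E t - (s - t) *\<^sub>R D) \<le> norm ?d ^ 2 + norm (?d - (s - t) *\<^sub>R D)"
          using exp_rem_bound[OF elim(1)] norm_triangle_ineq[of "exp ?d - 1 - ?d" "?d - (s - t) *\<^sub>R D"]
          by simp
        also have "norm ?d \<le> (q s + norm D) * norm (s - t)"
        proof -
          have "norm ?d \<le> norm (?d - (s - t) *\<^sub>R D) + norm ((s - t) *\<^sub>R D)"
            using norm_triangle_ineq[of "?d - (s-t) *\<^sub>R D" "(s-t) *\<^sub>R D"] by simp
          also have "norm (?d - (s - t) *\<^sub>R D) = q s * norm (s - t)"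
            using st by (simp add: q_def)
          also have "norm ((s - t) *\<^sub>R D) = norm D * norm (s - t)" by simp
          finally have "norm ?d \<le> q s * norm (s - t) + norm D * norm (s - t)" .
          moreover have "(q s + norm D) * norm (s - t) = q s * norm (s - t) + norm D * norm (s - t)"
            by (simp add: algebra_simps)
          ultimately show ?thesis by linarith
        qed
        then have "norm ?d ^ 2 \<le> norm ?d * ((q s + norm D) * norm (s - t))"
          by (simp add: power2_eq_square mult_left_mono)
        finally have "norm (E s - E t - (s - t) *\<^sub>R D) \<le> norm ?d * ((q s + norm D) * norm (s - t)) + q s * norm (s - t)"
          using st by (simp add: q_def)
        then have "norm (E s - E t - (s - t) *\<^sub>R D) / norm (s - t) \<le> (norm ?d * ((q s + norm D) * norm (s - t)) + q s * norm (s - t)) / norm (s - t)"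
          using st by (simp add: divide_right_mono)
        also have "\<dots> = u s" using st by (simp add: u_def field_simps)
        finally show ?case .
      qed
    qed
  qed
  then have dE: "(E has_vector_derivative D) (at t within S)"
    by (simp add: has_vector_derivative_def)
  have eq: "exp (F s) = exp (F t) * E s" if sS: "s \<in> S" for s
  proof -
    have "F t * (F s - F t) = (F s - F t) * F t" using comm[OF sS] by (simp add: algebra_simps)
    then have "exp (F t + (F s - F t)) = exp (F t) * exp (F s - F t)" by (rule exp_add_commuting)
    then show ?thesis by (simp add: E_def)
  qed
  show ?thesis
    by (rule has_vector_derivative_transform[OF tS eq has_vector_derivative_mult_right[OF dE]])
qed

lemma suminf_commute:
  fixes f :: "nat \<Rightarrow> 'b::{real_normed_algebra,banach}"
  assumes "summable f" "\<And>n. a * f n = f n * a"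
  shows "a * suminf f = suminf f * a"
  using suminf_mult[OF assms(1), of a] suminf_mult2[OF assms(1), of a] assms(2) by simp

lemma exp_neg_log_series:
  fixes x :: "'b::{real_normed_algebra_1,banach}"
  assumes x1: "norm x < 1"
  shows "exp (- (\<Sum>n. (1 / real (Suc n)) *\<^sub>R x ^ Suc n)) = 1 - x"
proof -
  define r where "r = norm x"
  define \<rho> where "\<rho> = 2 / (1 + r)"
  have r0: "0 \<le> r" "r < 1" using x1 by (auto simp: r_def)
  have \<rho>1: "1 < \<rho>" using r0 by (simp add: \<rho>_def field_simps)
  have \<rho>r: "\<rho> * r < 1" using r0 by (simp add: \<rho>_def field_simps)
  have \<rho>r0: "0 \<le> \<rho> * r" using r0 \<rho>1 by simp
  define S where "S = {-\<rho><..<\<rho>}"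
  have cS: "convex S" unfolding S_def by simp
  have S01: "0 \<in> S" "1 \<in> S" using \<rho>1 by (auto simp: S_def)
  have tS: "\<bar>t\<bar> \<le> \<rho>" if "t \<in> S" for t using that by (auto simp: S_def)
  define f where "f n t = (t ^ Suc n / real (Suc n)) *\<^sub>R x ^ Suc n" for n t
  define F where "F t = (\<Sum>n. f n t)" for t
  define a where "a n t = t ^ n *\<^sub>R x ^ Suc n" for n t
  define G where "G t = (\<Sum>n. (t *\<^sub>R x) ^ n)" for t
  have nyp: "norm ((t *\<^sub>R x) ^ n) \<le> (\<rho> * r) ^ n" if "t \<in> S" for t n
  proof -
    have "norm ((t *\<^sub>R x) ^ n) \<le> norm (t *\<^sub>R x) ^ n" by (rule norm_power_ineq)
    also have "\<dots> \<le> (\<rho> * r) ^ n"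
      using tS[OF that] r0 by (auto simp: r_def intro!: power_mono mult_right_mono)
    finally show ?thesis .
  qed
  have sumgeo: "summable (\<lambda>n. (\<rho> * r) ^ n)" using \<rho>r \<rho>r0 by (intro summable_geometric) simp
  have sG: "summable (\<lambda>n. (t *\<^sub>R x) ^ n)" if "t \<in> S" for t
    by (rule summable_comparison_test'[OF sumgeo, of 0]) (use nyp[OF that] in auto)
  have na: "norm (a n t) \<le> r * (\<rho> * r) ^ n" if "t \<in> S" for t n
  proof -
    have "a n t = x * (t *\<^sub>R x) ^ n" by (simp add: a_def power_commutes)
    then have "norm (a n t) \<le> norm x * norm ((t *\<^sub>R x) ^ n)" using norm_mult_ineq by metis
    also have "\<dots> \<le> r * (\<rho> * r) ^ n" using nyp[OF that] r0 by (simp add: r_def mult_left_mono)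
    finally show ?thesis .
  qed
  have xG: "x * G t = (\<Sum>n. a n t)" if "t \<in> S" for t
    unfolding G_def suminf_mult[OF sG[OF that], symmetric]
    by (simp add: a_def power_commutes)
  have sa: "summable (\<lambda>n. a n t)" if "t \<in> S" for t
    by (rule summable_comparison_test'[OF summable_mult[OF sumgeo, of r], of 0]) (use na[OF that] in auto)
  have G1: "(1 - t *\<^sub>R x) * G t = 1" and G2: "G t * (1 - t *\<^sub>R x) = 1" if "t \<in> S" for t
  proof -
    let ?y = "t *\<^sub>R x"
    have s: "summable (\<lambda>n. ?y ^ n)" by (rule sG[OF that])
    have h0: "(\<Sum>n. ?y ^ Suc n) = (\<Sum>n. ?y ^ n) - ?y ^ 0" by (rule suminf_split_head[OF s])
    have h: "(\<Sum>n. ?y ^ Suc n) = G t - 1" unfolding G_def h0 by (simp only: power_0)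
    have "?y * G t = (\<Sum>n. ?y ^ Suc n)" unfolding G_def suminf_mult[OF s, symmetric] by (simp only: power_Suc)
    then show "(1 - t *\<^sub>R x) * G t = 1" using h by (simp add: algebra_simps)
    have "G t * ?y = (\<Sum>n. ?y ^ Suc n)" unfolding G_def suminf_mult2[OF s] by (simp only: power_Suc2)
    then show "G t * (1 - t *\<^sub>R x) = 1" using h by (simp add: algebra_simps)
  qed
  have sf: "summable (\<lambda>n. f n t)" if "t \<in> S" for t
  proof (rule summable_comparison_test'[OF summable_mult[OF sumgeo, of "\<rho> * r"], of 0])
    fix n :: nat
    have "norm (f n t) = (\<bar>t\<bar> ^ Suc n / real (Suc n)) * norm (x ^ Suc n)"
      unfolding f_def norm_scaleR abs_divide power_abs by simp
    also have "\<dots> \<le> \<bar>t\<bar> ^ Suc n * norm x ^ Suc n"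
    proof (rule mult_mono)
      have "\<bar>t\<bar> ^ Suc n * 1 \<le> \<bar>t\<bar> ^ Suc n * real (Suc n)"
        by (rule mult_left_mono) auto
      then show "\<bar>t\<bar> ^ Suc n / real (Suc n) \<le> \<bar>t\<bar> ^ Suc n" by (simp add: divide_le_eq)
    qed (auto simp del: power_Suc simp add: norm_power_ineq)
    also have "\<dots> = (\<bar>t\<bar> * r) ^ Suc n" by (simp add: r_def power_mult_distrib)
    also have "\<dots> \<le> (\<rho> * r) ^ Suc n"
      using tS[OF that] r0 by (intro power_mono mult_right_mono) auto
    finally show "norm (f n t) \<le> \<rho> * r * (\<rho> * r) ^ n" by simp
  qed
  have dF: "(F has_vector_derivative x * G t) (at t within S)" if tS': "t \<in> S" for t
  proof -
    have df: "(f n has_derivative (\<lambda>h. h *\<^sub>R a n t')) (at t' within S)" for n t'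
    proof -
      have "((\<lambda>t. t ^ Suc n / real (Suc n)) has_real_derivative (1 + real n) * (1 * t' ^ n) / real (Suc n)) (at t' within S)"
        by (rule DERIV_cdivide[OF DERIV_power_Suc[OF DERIV_ident]])
      moreover have "(1 + real n) * (1 * t' ^ n) / real (Suc n) = t' ^ n" by simp
      ultimately have "((\<lambda>t. t ^ Suc n / real (Suc n)) has_real_derivative t' ^ n) (at t' within S)"
        by metis
      then have "((\<lambda>t. (t ^ Suc n / real (Suc n)) *\<^sub>R x ^ Suc n) has_vector_derivative
          ((t' ^ Suc n / real (Suc n)) *\<^sub>R 0 + t' ^ n *\<^sub>R x ^ Suc n)) (at t' within S)"
        by (rule has_vector_derivative_scaleR[OF _ has_vector_derivative_const])
      then show ?thesis by (simp add: has_vector_derivative_def f_def[abs_def] a_def)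
    qed
    have ul: "uniform_limit S (\<lambda>n t. \<Sum>i<n. a i t) (\<lambda>t. \<Sum>i. a i t) sequentially"
      by (rule Weierstrass_m_test[OF na summable_mult[OF sumgeo, of r]])
    have "\<exists>g. \<forall>t\<in>S. (\<lambda>n. f n t) sums g t \<and> (g has_derivative (\<lambda>h. h *\<^sub>R (x * G t))) (at t within S)"
    proof (rule has_derivative_series[OF cS, where f' = "\<lambda>n t h. h *\<^sub>R a n t"])
      show "(f n has_derivative (\<lambda>h. h *\<^sub>R a n t')) (at t' within S)" if "t' \<in> S" for n t' by (rule df)
      show "0 \<in> S" by (rule S01)
      show "(\<lambda>n. f n 0) sums 0" by (simp add: f_def)
      fix e :: real assume e: "e > 0"
      show "\<forall>\<^sub>F n in sequentially. \<forall>t\<in>S. \<forall>h. norm ((\<Sum>i<n. h *\<^sub>R a i t) - h *\<^sub>R (x * G t)) \<le> e * norm h"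
        using uniform_limitD[OF ul e]
      proof eventually_elim
        case (elim n)
        show ?case
        proof (intro ballI allI)
          fix t h assume t: "t \<in> S"
          have "norm ((\<Sum>i<n. h *\<^sub>R a i t) - h *\<^sub>R (x * G t)) = \<bar>h\<bar> * dist (\<Sum>i<n. a i t) (\<Sum>i. a i t)"
            by (simp add: xG[OF t] dist_norm scaleR_sum_right[symmetric] flip: scaleR_diff_right)
          also have "\<dots> \<le> \<bar>h\<bar> * e" using elim t by (intro mult_left_mono) auto
          finally show "norm ((\<Sum>i<n. h *\<^sub>R a i t) - h *\<^sub>R (x * G t)) \<le> e * norm h" by (simp add: mult.commute)
        qed
      qed
    qed
    then obtain g where g: "\<And>t. t \<in> S \<Longrightarrow> (\<lambda>n. f n t) sums g t \<and> (g has_derivative (\<lambda>h. h *\<^sub>R (x * G t))) (at t within S)"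
      by blast
    have "F s = g s" if "s \<in> S" for s using g[OF that] by (simp add: F_def sums_iff)
    then show ?thesis
      unfolding has_vector_derivative_def using g[OF tS'] has_derivative_transform[OF tS'] by blast
  qed
  have xF: "x * F s = F s * x" if "s \<in> S" for s
    unfolding F_def
    by (rule suminf_commute[OF sf[OF that]]) (simp add: f_def power_commutes del: power_Suc)
  have commF: "F s * F t = F t * F s" if "s \<in> S" "t \<in> S" for s t
  proof -
    have "F t * x ^ k = x ^ k * F t" for k
      using power_commuting_commutes[OF xF[OF that(2)]] by simp
    then have "F t * f n s = f n s * F t" for n by (simp add: f_def del: power_Suc)
    then show ?thesis unfolding F_def[of s] by (intro suminf_commute[OF sf[OF that(1)], symmetric]) auto
  qed
  define \<Psi> where "\<Psi> t = exp (F t) * (1 - t *\<^sub>R x)" for t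
  have d\<Psi>: "(\<Psi> has_vector_derivative 0) (at t within S)" if tS': "t \<in> S" for t
  proof -
    have de: "((\<lambda>s. exp (F s)) has_vector_derivative exp (F t) * (x * G t)) (at t within S)"
      by (rule exp_chain_commuting[OF dF[OF tS'] commF[OF _ tS'] tS'])
    have dl: "((\<lambda>s. 1 - s *\<^sub>R x) has_vector_derivative - x) (at t within S)"
      by (auto intro!: derivative_eq_intros)
    have "(\<Psi> has_vector_derivative (exp (F t) * - x + exp (F t) * (x * G t) * (1 - t *\<^sub>R x))) (at t within S)"
      unfolding \<Psi>_def[abs_def] by (rule has_vector_derivative_mult[OF de dl])
    moreover have "exp (F t) * - x + exp (F t) * (x * G t) * (1 - t *\<^sub>R x) = 0"
      using G2[OF tS'] by (simp add: mult.assoc)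
    ultimately show ?thesis by simp
  qed
  obtain c where c: "\<And>t. t \<in> S \<Longrightarrow> \<Psi> t = c"
    using has_vector_derivative_zero_constant[OF cS d\<Psi>] by blast
  have F0: "F 0 = 0" by (simp add: F_def f_def)
  have "\<Psi> 1 = \<Psi> 0" using c S01 by simp
  then have P1: "exp (F 1) * (1 - x) = 1" by (simp add: \<Psi>_def F0)
  have "exp (- F 1) = exp (- F 1) * (exp (F 1) * (1 - x))" using P1 by simp
  also have "\<dots> = (exp (F 1) * exp (- F 1)) * (1 - x)"
    using exp_minus_inverse[of "- F 1"] by (simp add: mult.assoc[symmetric] exp_minus_inverse)
  also have "\<dots> = 1 - x" by (simp add: exp_minus_inverse)
  finally have "exp (- F 1) = 1 - x" .
  moreover have "F 1 = (\<Sum>n. (1 / real (Suc n)) *\<^sub>R x ^ Suc n)" by (simp add: F_def f_def)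
  ultimately show ?thesis by simp
qed




lemma pr_power: "pr (w ^ k) = opow k (pr w)"
  by (induction k) (simp_all add: opow_def)

lemma pr_suminf: "summable f \<Longrightarrow> pr (suminf f) = (\<Sum>n. pr (f n))"
  using bounded_linear.suminf[OF bounded_linear_pr] by blast

lemma pr_summable: "summable f \<Longrightarrow> summable (\<lambda>n. pr (f n))"
  using bounded_linear.summable[OF bounded_linear_pr] by blast

lemma pr_exp:
  fixes w :: "'a::{real_normed_vector,complete_space} W"
  shows "pr (exp w) = (\<Sum>n. (1 / fact n) *\<^sub>R opow n (pr w))"
  unfolding exp_def pr_suminf[OF summable_exp_generic]
  by (simp add: pr_power divide_inverse)

lemma pr_exp_cong:
  fixes w :: "'a::{real_normed_vector,complete_space} W"
  shows "pr w = pr w' \<Longrightarrow> pr (exp w) = pr (exp w')"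
  by (simp add: pr_exp)

definition sa :: "('a::real_inner \<Rightarrow>\<^sub>L 'a) \<Rightarrow> bool" where
  "sa T \<longleftrightarrow> (\<forall>x y. inner (T x) y = inner x (T y))"
definition psd :: "('a::real_inner \<Rightarrow>\<^sub>L 'a) \<Rightarrow> bool" where
  "psd T \<longleftrightarrow> (\<forall>x. 0 \<le> inner (T x) x)"

lemma op_le_psd: "op_le X Y \<longleftrightarrow> psd (Y - X)"
  by (simp add: op_le_def psd_def)

lemma quad_disc:
  fixes a b c :: real
  assumes "\<And>s. 0 \<le> a + 2 * s * b + s ^ 2 * c"
  shows "b ^ 2 \<le> a * c"
proof (cases "c = 0")
  case True
  have "b = 0"
  proof (rule ccontr)
    assume b: "b \<noteq> 0"
    have "0 \<le> a + 2 * (- (a + 1) / (2 * b)) * b + (- (a + 1) / (2 * b)) ^ 2 * c" by (rule assms)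
    also have "\<dots> = -1" using b True by (simp add: field_simps)
    finally show False by simp
  qed
  then show ?thesis using True by simp
next
  case False
  have c0: "c \<ge> 0"
  proof (rule ccontr)
    assume "\<not> c \<ge> 0"
    then have c: "c < 0" by simp
    define s where "s = sqrt ((\<bar>a\<bar> + 1) / (- c))"
    have ss: "s ^ 2 = (\<bar>a\<bar> + 1) / (- c)" unfolding s_def
      by (rule real_sqrt_pow2) (rule divide_nonneg_pos, use c in auto)
    have "0 \<le> a + 2 * s * b + s ^ 2 * c" by (rule assms)
    moreover have "0 \<le> a + 2 * (- s) * b + (- s) ^ 2 * c" by (rule assms)
    ultimately have "0 \<le> 2 * a + 2 * (s ^ 2 * c)" by simp
    also have "s ^ 2 * c = - (\<bar>a\<bar> + 1)" using c by (simp add: ss field_simps)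
    finally show False by simp
  qed
  then have c: "c > 0" using False by simp
  have "0 \<le> a + 2 * (- b / c) * b + (- b / c) ^ 2 * c" by (rule assms)
  also have "\<dots> = a - b ^ 2 / c" using c by (simp add: field_simps power2_eq_square)
  finally show ?thesis using c by (simp add: field_simps)
qed

lemma cs_psd:
  assumes "sa T" "psd T"
  shows "inner (T x) y ^ 2 \<le> inner (T x) x * inner (T y) y"
proof (rule quad_disc)
  fix s :: real
  have "0 \<le> inner (T (x + s *\<^sub>R y)) (x + s *\<^sub>R y)" using assms(2) by (simp add: psd_def)
  also have "\<dots> = inner (T x) x + 2 * s * inner (T x) y + s ^ 2 * inner (T y) y"
    using assms(1) unfolding sa_def
    by (simp add: blinfun.add_right blinfun.scaleR_right inner_add_left inner_add_right
        power2_eq_square algebra_simps inner_commute[of x "T y"])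
  finally show "0 \<le> inner (T x) x + 2 * s * inner (T x) y + s ^ 2 * inner (T y) y" .
qed

lemma norm_apply_psd:
  assumes "sa T" "psd T" "0 \<le> q" "\<And>x. inner (T x) x \<le> q * norm x ^ 2"
  shows "norm (T x) \<le> q * norm x"
proof (cases "T x = 0")
  case True then show ?thesis using assms(3) by simp
next
  case False
  have "norm (T x) ^ 4 = inner (T x) (T x) ^ 2"
    by (simp add: power2_norm_eq_inner[symmetric] power_mult[symmetric])
  also have "\<dots> \<le> inner (T x) x * inner (T (T x)) (T x)" by (rule cs_psd[OF assms(1,2)])
  also have "\<dots> \<le> (q * norm x ^ 2) * (q * norm (T x) ^ 2)"
    using assms(2,3) by (intro mult_mono assms(4)) (auto simp: psd_def)
  also have "(q * norm x ^ 2) * (q * norm (T x) ^ 2) = (q * norm x) ^ 2 * norm (T x) ^ 2"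
    by (simp add: power2_eq_square algebra_simps)
  also have "norm (T x) ^ 4 = norm (T x) ^ 2 * norm (T x) ^ 2"
    by (simp add: power2_eq_square power4_eq_xxxx algebra_simps)
  finally have "norm (T x) ^ 2 * norm (T x) ^ 2 \<le> (q * norm x) ^ 2 * norm (T x) ^ 2" .
  moreover have "norm (T x) ^ 2 > 0" using False by simp
  ultimately have "norm (T x) ^ 2 \<le> (q * norm x) ^ 2" by (rule mult_right_le_imp_le)
  then show ?thesis using assms(3) by (simp add: power2_le_iff_abs_le)
qed

lemma sa_id[simp]: "sa id_blinfun" by (simp add: sa_def)

lemma sp_facts:
  fixes T :: "'a::{real_inner,complete_space} \<Rightarrow>\<^sub>L 'a"
  assumes sp: "strictly_pos T" and nt: "(x0::'a) \<noteq> 0"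
  shows "sa T" "psd T" "norm T > 0" "norm (id_blinfun - (1 / norm T) *\<^sub>R T) < 1"
proof -
  show saT: "sa T" using sp by (simp add: strictly_pos_def sa_def)
  show psdT: "psd T" using sp unfolding strictly_pos_def psd_def by blast
  obtain S where S1: "S o\<^sub>L T = id_blinfun" and S2: "T o\<^sub>L S = id_blinfun"
    using sp by (auto simp: strictly_pos_def op_invertible_def)
  have ST: "S (T x) = x" for x using S1 by (metis blinfun_apply_blinfun_compose blinfun_apply_id_blinfun)
  have "T \<noteq> 0" using ST[of x0] nt by auto
  then show Mpos: "norm T > 0" by simp
  define M where "M = norm T"
  have "S \<noteq> 0" using ST[of x0] nt by auto
  then have Spos: "norm S > 0" by simp
  have lowTx: "norm x \<le> norm S * norm (T x)" for x
    using norm_blinfun[of S "T x"] ST[of x] by simp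
  have Tx2: "norm (T x) ^ 2 \<le> M * inner (T x) x" for x
  proof (cases "T x = 0")
    case True then show ?thesis by simp
  next
    case False
    have "norm (T x) ^ 4 = inner (T x) (T x) ^ 2"
      by (simp add: power2_norm_eq_inner[symmetric] power_mult[symmetric])
    also have "\<dots> \<le> inner (T x) x * inner (T (T x)) (T x)" by (rule cs_psd[OF saT psdT])
    also have "\<dots> \<le> inner (T x) x * (M * norm (T x) ^ 2)"
    proof (rule mult_left_mono)
      have "inner (T (T x)) (T x) \<le> norm (T (T x)) * norm (T x)" by (rule norm_cauchy_schwarz)
      also have "\<dots> \<le> (M * norm (T x)) * norm (T x)"
        by (intro mult_right_mono) (auto simp: M_def norm_blinfun)
      finally show "inner (T (T x)) (T x) \<le> M * norm (T x) ^ 2" by (simp add: power2_eq_square mult.assoc)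
      show "0 \<le> inner (T x) x" using psdT by (simp add: psd_def)
    qed
    also have "norm (T x) ^ 4 = norm (T x) ^ 2 * norm (T x) ^ 2"
      by (simp add: power2_eq_square power4_eq_xxxx algebra_simps)
    finally have "norm (T x) ^ 2 * norm (T x) ^ 2 \<le> (M * inner (T x) x) * norm (T x) ^ 2"
      by (simp add: algebra_simps)
    moreover have "norm (T x) ^ 2 > 0" using False by simp
    ultimately show ?thesis by (rule mult_right_le_imp_le)
  qed
  define m where "m = 1 / (norm S ^ 2 * M)"
  have mpos: "m > 0" using Spos Mpos by (simp add: m_def M_def)
  have lowq: "m * norm x ^ 2 \<le> inner (T x) x" for x
  proof -
    have "norm x ^ 2 \<le> (norm S * norm (T x)) ^ 2" using lowTx[of x] by (simp add: power_mono)
    also have "\<dots> = norm S ^ 2 * norm (T x) ^ 2" by (simp add: power_mult_distrib)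
    also have "\<dots> \<le> norm S ^ 2 * (M * inner (T x) x)" using Tx2[of x] by (simp add: mult_left_mono)
    finally have "norm x ^ 2 \<le> (norm S ^ 2 * M) * inner (T x) x" by (simp add: mult.assoc)
    then show ?thesis using Spos Mpos by (simp add: m_def M_def field_simps)
  qed
  define X where "X = id_blinfun - (1 / M) *\<^sub>R T"
  have Xx: "inner (X x) x = norm x ^ 2 - inner (T x) x / M" for x
    by (simp add: X_def blinfun.diff_left blinfun.scaleR_left inner_diff_left power2_norm_eq_inner)
  have saX: "sa X" using saT by (simp add: sa_def X_def blinfun.diff_left blinfun.scaleR_left inner_diff_left inner_diff_right)
  have psdX: "psd X"
    unfolding psd_def Xx
  proof
    fix x
    have "inner (T x) x \<le> norm (T x) * norm x" by (rule norm_cauchy_schwarz)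
    also have "\<dots> \<le> M * norm x * norm x" by (intro mult_right_mono) (auto simp: M_def norm_blinfun)
    finally show "0 \<le> norm x ^ 2 - inner (T x) x / M" using Mpos
      by (simp add: M_def field_simps power2_eq_square)
  qed
  define q where "q = 1 - m / M"
  have upX: "inner (X x) x \<le> q * norm x ^ 2" for x
    using lowq[of x] Mpos by (simp add: Xx q_def M_def field_simps)
  have q0: "0 \<le> q"
  proof -
    have "0 \<le> inner (X x0) x0" using psdX by (simp add: psd_def)
    also have "\<dots> \<le> q * norm x0 ^ 2" by (rule upX)
    finally show ?thesis using nt by (simp add: zero_le_mult_iff)
  qed
  have "norm X \<le> q"
    by (rule norm_blinfun_bound[OF q0]) (rule norm_apply_psd[OF saX psdX q0 upX])
  also have "q < 1" using mpos Mpos by (simp add: q_def M_def)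
  finally show "norm (id_blinfun - (1 / norm T) *\<^sub>R T) < 1" by (simp add: X_def M_def)
qed

lemma sa_add: "sa A \<Longrightarrow> sa B \<Longrightarrow> sa (A + B)"
  by (simp add: sa_def blinfun.add_left inner_add_left inner_add_right)
lemma sa_diff: "sa A \<Longrightarrow> sa B \<Longrightarrow> sa (A - B)"
  by (simp add: sa_def blinfun.diff_left inner_diff_left inner_diff_right)
lemma sa_scaleR: "sa A \<Longrightarrow> sa (c *\<^sub>R A)"
  by (simp add: sa_def blinfun.scaleR_left)
lemma sa_zero[simp]: "sa 0" by (simp add: sa_def)
lemma sa_minus: "sa A \<Longrightarrow> sa (- A)"
  by (simp add: sa_def blinfun.minus_left)

lemma opow_Suc: "opow (Suc k) Y = Y o\<^sub>L opow k Y" by (simp add: opow_def)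
lemma opow_0: "opow 0 Y = id_blinfun" by (simp add: opow_def)

lemma opow_comm_apply: "opow k Y (Y x) = Y (opow k Y x)"
  by (induction k) (simp_all add: opow_Suc opow_0)

lemma sa_opow: "sa Y \<Longrightarrow> sa (opow k Y)"
proof (induction k)
  case 0 then show ?case by (simp add: opow_0)
next
  case (Suc k)
  show ?case unfolding sa_def
  proof (intro allI)
    fix x y
    have "inner (opow (Suc k) Y x) y = inner (Y (opow k Y x)) y" by (simp add: opow_Suc)
    also have "\<dots> = inner (opow k Y x) (Y y)" using Suc.prems by (simp add: sa_def)
    also have "\<dots> = inner x (opow k Y (Y y))" using Suc.IH[OF Suc.prems] by (simp add: sa_def)
    also have "\<dots> = inner x (opow (Suc k) Y y)" by (simp add: opow_Suc opow_comm_apply)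
    finally show "inner (opow (Suc k) Y x) y = inner x (opow (Suc k) Y y)" .
  qed
qed

lemma inner_suminf_left:
  fixes f :: "nat \<Rightarrow> ('a::{real_inner,complete_space} \<Rightarrow>\<^sub>L 'a)"
  assumes "summable f"
  shows "inner (suminf f x) y = (\<Sum>n. inner (f n x) y)"
proof -
  have bl: "bounded_linear (\<lambda>T::'a \<Rightarrow>\<^sub>L 'a. inner (T x) y)"
    by (rule bounded_linear_compose[OF bounded_linear_inner_left blinfun.bounded_linear_left])
  show ?thesis using bounded_linear.suminf[OF bl assms] .
qed

lemma inner_suminf_right:
  fixes f :: "nat \<Rightarrow> ('a::{real_inner,complete_space} \<Rightarrow>\<^sub>L 'a)"
  assumes "summable f"
  shows "inner x (suminf f y) = (\<Sum>n. inner x (f n y))"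
  using inner_suminf_left[OF assms, of y x] by (simp add: inner_commute)

lemma inner_summable_left:
  fixes f :: "nat \<Rightarrow> ('a::{real_inner,complete_space} \<Rightarrow>\<^sub>L 'a)"
  assumes "summable f"
  shows "summable (\<lambda>n. inner (f n x) y)"
proof -
  have bl: "bounded_linear (\<lambda>T::'a \<Rightarrow>\<^sub>L 'a. inner (T x) y)"
    by (rule bounded_linear_compose[OF bounded_linear_inner_left blinfun.bounded_linear_left])
  show ?thesis using bounded_linear.summable[OF bl assms] .
qed

lemma sa_suminf:
  fixes f :: "nat \<Rightarrow> ('a::{real_inner,complete_space} \<Rightarrow>\<^sub>L 'a)"
  assumes "summable f" "\<And>n. sa (f n)"
  shows "sa (suminf f)"
  unfolding sa_def inner_suminf_left[OF assms(1)] inner_suminf_right[OF assms(1)]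
  using assms(2) by (simp add: sa_def)

lemma summable_pr_exp:
  fixes w :: "'a::{real_normed_vector,complete_space} W"
  shows "summable (\<lambda>n. (1 / fact n) *\<^sub>R opow n (pr w))"
  using pr_summable[OF summable_exp_generic[of w]] by (simp add: pr_power divide_inverse)

lemma sa_pr_exp:
  fixes w :: "'a::{real_inner,complete_space} W"
  shows "sa (pr w) \<Longrightarrow> sa (pr (exp w))"
  unfolding pr_exp by (rule sa_suminf[OF summable_pr_exp]) (intro sa_scaleR sa_opow)

lemma sa_pr_power:
  fixes w :: "'a::{real_inner,complete_space} W"
  shows "sa (pr w) \<Longrightarrow> sa (pr (w ^ k))"
  by (simp add: pr_power sa_opow)

definition xo :: "('a::{real_inner,complete_space} \<Rightarrow>\<^sub>L 'a) \<Rightarrow> 'a W" where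
  "xo T = mk (id_blinfun - (1 / norm T) *\<^sub>R T) 0"

definition lg :: "('a::{real_inner,complete_space} \<Rightarrow>\<^sub>L 'a) \<Rightarrow> 'a W" where
  "lg T = ln (norm T) *\<^sub>R 1 - (\<Sum>n. (1 / real (Suc n)) *\<^sub>R xo T ^ Suc n)"

lemma norm_mk0: "norm (mk T 0) = norm T" by (simp add: norm_W)

lemma summable_logser:
  fixes x :: "'b::{real_normed_algebra_1,banach}"
  assumes "norm x < 1"
  shows "summable (\<lambda>n. (1 / real (Suc n)) *\<^sub>R x ^ Suc n)"
proof (rule summable_comparison_test'[OF summable_geometric[of "norm x"], of 0])
  show "norm (norm x) < 1" using assms by simp
  fix n :: nat
  have "norm ((1 / real (Suc n)) *\<^sub>R x ^ Suc n) = (1 / real (Suc n)) * norm (x ^ Suc n)" by simp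
  also have "\<dots> \<le> 1 * norm x ^ Suc n"
    by (intro mult_mono norm_power_ineq) auto
  also have "\<dots> \<le> norm x ^ n"
    using assms by (simp add: mult_left_le_one_le)
  finally show "norm ((1 / real (Suc n)) *\<^sub>R x ^ Suc n) \<le> norm x ^ n" .
qed

context
  fixes T :: "'a::{real_inner,complete_space} \<Rightarrow>\<^sub>L 'a" and x0 :: 'a
  assumes sp: "strictly_pos T" and nt: "x0 \<noteq> 0"
begin

lemma xo_norm: "norm (xo T) < 1"
  using sp_facts(4)[OF sp nt] by (simp add: xo_def norm_mk0)

lemma pr_lg: "pr (lg T) = op_log T"
  unfolding lg_def op_log_def pr_diff pr_suminf[OF summable_logser[OF xo_norm]] pr_scaleR pr_one pr_power
  by (simp add: xo_def del: power_Suc)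

lemma op_powr_lg: "op_powr T \<nu> = pr (exp (\<nu> *\<^sub>R lg T))"
  unfolding op_powr_def pr_exp pr_lg[symmetric]
proof (rule suminf_cong)
  fix n
  have "opow n (pr (\<nu> *\<^sub>R lg T)) = pr ((\<nu> *\<^sub>R lg T) ^ n)" by (rule pr_power[symmetric])
  also have "\<dots> = pr (\<nu> ^ n *\<^sub>R lg T ^ n)" by (simp only: scaleR_power)
  also have "\<dots> = \<nu> ^ n *\<^sub>R opow n (pr (lg T))" by (simp only: pr_scaleR pr_power)
  finally have "opow n (pr (\<nu> *\<^sub>R lg T)) = \<nu> ^ n *\<^sub>R opow n (pr (lg T))" .
  then show "(\<nu> ^ n / fact n) *\<^sub>R opow n (pr (lg T)) = (1 / fact n) *\<^sub>R opow n (pr (\<nu> *\<^sub>R lg T))"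
    by simp
qed

lemma sa_lg: "sa (pr (lg T))"
proof -
  have saX: "sa (pr (xo T))"
    using sp_facts(1)[OF sp nt] by (simp add: xo_def sa_diff sa_scaleR)
  show ?thesis
    unfolding pr_lg[symmetric] lg_def pr_diff pr_suminf[OF summable_logser[OF xo_norm]]
    by (intro sa_diff sa_suminf[OF pr_summable[OF summable_logser[OF xo_norm]]])
       (simp_all only: pr_scaleR pr_one sa_scaleR sa_id sa_pr_power[OF saX])
qed

lemma exp_lg: "pr (exp (lg T)) = T"
proof -
  define M where "M = norm T"
  have M: "M > 0" using sp_facts(3)[OF sp nt] by (simp add: M_def)
  define L where "L = (\<Sum>n. (1 / real (Suc n)) *\<^sub>R xo T ^ Suc n)"
  have "exp (lg T) = exp (ln M *\<^sub>R 1 + - L)" by (simp add: lg_def M_def L_def)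
  also have "\<dots> = exp (ln M *\<^sub>R 1) * exp (- L)"
    by (rule exp_add_commuting) simp
  also have "exp (- L) = 1 - xo T" unfolding L_def by (rule exp_neg_log_series[OF xo_norm])
  also have "exp (ln M *\<^sub>R (1 :: 'a W)) = M *\<^sub>R 1"
    using exp_of_real[of "ln M", where 'a="'a W"] M by (simp add: of_real_def)
  finally have "exp (lg T) = M *\<^sub>R (1 - xo T)" by simp
  then show ?thesis using M by (simp add: xo_def M_def)
qed

end


lemma psd_add: "psd A \<Longrightarrow> psd B \<Longrightarrow> psd (A + B)"
  by (simp add: psd_def blinfun.add_left inner_add_left add_nonneg_nonneg)
lemma psd_scaleR: "psd A \<Longrightarrow> 0 \<le> c \<Longrightarrow> psd (c *\<^sub>R A)"
  by (simp add: psd_def blinfun.scaleR_left)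
lemma psd_zero[simp]: "psd 0" by (simp add: psd_def)
lemma psd_sum: "(\<And>j. j \<in> I \<Longrightarrow> psd (f j)) \<Longrightarrow> psd (\<Sum>j\<in>I. f j)"
  by (induction I rule: infinite_finite_induct) (auto intro: psd_add)
lemma psd_sq: "sa Z \<Longrightarrow> psd (Z o\<^sub>L Z)"
  unfolding psd_def
proof
  fix x assume "sa Z"
  then have "inner (Z (Z x)) x = inner (Z x) (Z x)" unfolding sa_def by metis
  then show "0 \<le> inner ((Z o\<^sub>L Z) x) x" by simp
qed
lemma psd_congr: "sa Z \<Longrightarrow> psd P \<Longrightarrow> psd (Z o\<^sub>L P o\<^sub>L Z)"
  unfolding psd_def sa_def by simp

lemma norm_opow_le: "norm Y \<le> 1 \<Longrightarrow> norm (opow n Y) \<le> 1"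
proof (induction n)
  case 0 then show ?case by (simp add: opow_0 norm_id_blinfun_le)
next
  case (Suc n)
  have "norm (opow (Suc n) Y) \<le> norm Y * norm (opow n Y)"
    unfolding opow_Suc by (rule norm_blinfun_compose)
  also have "\<dots> \<le> 1 * 1" using Suc by (intro mult_mono) auto
  finally show ?case by simp
qed

lemma summable_exp_tail:
  fixes w :: "'b::{real_normed_algebra_1,banach}"
  shows "summable (\<lambda>n. inverse (fact (n + 2)) *\<^sub>R w ^ (n + 2))"
  using summable_ignore_initial_segment[OF summable_exp_generic[of w], of 2]
  by (simp add: divide_inverse_commute scaleR_conv_of_real)

lemma psd_g_base:
  fixes w :: "'a::{real_inner,complete_space} W"
  assumes saw: "sa (pr w)" and nw: "norm (pr w) \<le> 1"
  shows "psd (pr (exp w - 1 - w))"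
  unfolding psd_def
proof
  fix x :: 'a
  define Y where "Y = pr w"
  define z where "z = Y x"
  have saY: "sa Y" using saw by (simp add: Y_def)
  define f where "f n = inverse (fact (n + 2)) *\<^sub>R opow (n + 2) Y" for n
  have sf: "summable f"
    using pr_summable[OF summable_exp_tail[of w]] unfolding f_def Y_def by (simp only: pr_scaleR pr_power)
  have "pr (exp w - 1 - w) = pr (\<Sum>n. inverse (fact (n + 2)) *\<^sub>R w ^ (n + 2))"
    by (subst exp_first_two_terms) simp
  also have "\<dots> = suminf f"
    unfolding pr_suminf[OF summable_exp_tail] f_def Y_def by (simp only: pr_scaleR pr_power)
  finally have P: "pr (exp w - 1 - w) = suminf f" .
  define t where "t n = inner (f n x) x" for n
  have st: "summable t" unfolding t_def by (rule inner_summable_left[OF sf])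
  have tn: "t n = inverse (fact (n + 2)) * inner (opow n Y z) z" for n
  proof -
    have "opow (n + 2) Y x = Y (opow n Y z)"
      by (simp add: opow_Suc z_def opow_comm_apply numeral_2_eq_2)
    then have "inner (opow (n + 2) Y x) x = inner (opow n Y z) z"
      using saY by (simp add: sa_def z_def)
    then show ?thesis by (simp add: t_def f_def blinfun.scaleR_left)
  qed
  have bnd: "\<bar>inner (opow n Y z) z\<bar> \<le> norm z ^ 2" for n
  proof -
    have "\<bar>inner (opow n Y z) z\<bar> \<le> norm (opow n Y z) * norm z" by (rule Cauchy_Schwarz_ineq2)
    also have "\<dots> \<le> (norm (opow n Y) * norm z) * norm z"
      by (intro mult_right_mono norm_blinfun) simp
    also have "\<dots> \<le> (1 * norm z) * norm z"
      using norm_opow_le[of Y n] nw by (intro mult_right_mono) (auto simp: Y_def)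
    finally show ?thesis by (simp add: power2_eq_square)
  qed
  define d where "d (n::nat) = (if n = 0 then 1 else 0 :: real)" for n
  define c where "c n = norm z ^ 2 * (d n - inverse (fact (n + 2)))" for n
  have sinv: "(\<lambda>n. inverse (fact (n + 2)) :: real) sums (exp 1 - 2)"
  proof -
    have s: "summable (\<lambda>n. inverse (fact (n + 2)) *\<^sub>R (1::real) ^ (n + 2))" by (rule summable_exp_tail)
    have "exp (1::real) = 1 + 1 + (\<Sum>n. inverse (fact (n + 2)) *\<^sub>R (1::real) ^ (n + 2))"
      by (rule exp_first_two_terms)
    then show ?thesis using s by (simp add: sums_iff)
  qed
  have sd: "d sums 1" unfolding d_def using sums_single[of 0 "\<lambda>_. 1::real"] by simp
  have sc: "c sums (norm z ^ 2 * (1 - (exp 1 - 2)))"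
    unfolding c_def by (intro sums_mult sums_diff sd sinv)
  have tc: "c n \<le> t n" for n
  proof (cases "n = 0")
    case True
    then show ?thesis by (simp add: c_def d_def tn opow_0 power2_norm_eq_inner)
  next
    case False
    have "- (norm z ^ 2) \<le> inner (opow n Y z) z" using bnd[of n] by linarith
    then have "inverse (fact (n + 2)) * - (norm z ^ 2) \<le> inverse (fact (n + 2)) * inner (opow n Y z) z"
      by (intro mult_left_mono) auto
    then show ?thesis using False by (simp add: c_def d_def tn mult.commute)
  qed
  have "norm z ^ 2 * (1 - (exp 1 - 2)) \<le> suminf t"
    using suminf_le[OF tc sums_summable[OF sc] st] sums_unique[OF sc] by simp
  moreover have "0 \<le> norm z ^ 2 * (1 - (exp 1 - 2))"
    using exp_le by (intro mult_nonneg_nonneg) auto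
  moreover have "suminf t = inner (pr (exp w - 1 - w) x) x"
    unfolding P t_def by (rule inner_suminf_left[OF sf, symmetric])
  ultimately show "0 \<le> inner (pr (exp w - 1 - w) x) x" by linarith
qed

lemma g_double:
  fixes w :: "'b::{real_normed_algebra_1,banach}"
  shows "exp (2 *\<^sub>R w) - 1 - 2 *\<^sub>R w = 2 *\<^sub>R (exp w - 1 - w) + (exp w - 1) * (exp w - 1)"
proof -
  have "exp (2 *\<^sub>R w) = exp (w + w)" by (simp add: scaleR_2)
  also have "\<dots> = exp w * exp w" by (rule exp_add_commuting) simp
  finally show ?thesis by (simp add: algebra_simps scaleR_2)
qed

lemma psd_g:
  fixes w :: "'a::{real_inner,complete_space} W"
  assumes saw: "sa (pr w)"
  shows "psd (pr (exp w - 1 - w))"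
proof -
  define w' where "w' = mk (pr w) 0"
  have pw: "pr w' = pr w" by (simp add: w'_def)
  have eq: "pr (exp w - 1 - w) = pr (exp w' - 1 - w')"
    using pr_exp_cong[OF pw] pw by simp
  obtain k :: nat where k: "norm (pr w) < 2 ^ k" using real_arch_pow[of 2 "norm (pr w)"] by auto
  define v where "v = (1 / 2 ^ k) *\<^sub>R w'"
  have sav: "sa (pr v)" using saw by (simp add: v_def pw sa_scaleR)
  have nv: "norm (pr v) \<le> 1" using k by (simp add: v_def pw field_simps)
  have "psd (pr (exp ((2 ^ j) *\<^sub>R v) - 1 - (2 ^ j) *\<^sub>R v))" for j :: nat
  proof (induction j)
    case 0 then show ?case using psd_g_base[OF sav nv] by simp
  next
    case (Suc j)
    define u where "u = (2 ^ j) *\<^sub>R v"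
    have "(2 ^ Suc j) *\<^sub>R v = 2 *\<^sub>R u" by (simp add: u_def)
    then have "exp ((2 ^ Suc j) *\<^sub>R v) - 1 - (2 ^ Suc j) *\<^sub>R v = 2 *\<^sub>R (exp u - 1 - u) + (exp u - 1) * (exp u - 1)"
      by (simp add: g_double)
    moreover have "sa (pr (exp u - 1))" using sav
      by (simp add: u_def sa_diff sa_pr_exp sa_scaleR)
    ultimately show ?case using Suc.IH
      by (simp only: pr_add pr_scaleR pr_mult u_def) (intro psd_add psd_scaleR psd_sq, auto)
  qed
  from this[of k] have "psd (pr (exp w' - 1 - w'))" by (simp add: v_def)
  then show ?thesis unfolding eq .
qed

lemma exp_scaleR_mult:
  fixes y :: "'b::{real_normed_algebra_1,banach}"
  shows "exp (a *\<^sub>R y) * exp (b *\<^sub>R y) = exp ((a + b) *\<^sub>R y)"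
  by (simp add: exp_add_commuting[symmetric] scaleR_add_left)

lemma exp_scaleR_comm:
  fixes y :: "'b::{real_normed_algebra_1,banach}"
  shows "exp (a *\<^sub>R y) * exp (b *\<^sub>R y) = exp (b *\<^sub>R y) * exp (a *\<^sub>R y)"
  by (simp add: exp_scaleR_mult add.commute)

lemma exp_scaleR_comm_y:
  fixes y :: "'b::{real_normed_algebra_1,banach}"
  shows "exp (a *\<^sub>R y) * y = y * exp (a *\<^sub>R y)"
  by (rule exp_times_scaleR_commute)

lemma psd_weighted:
  fixes y :: "'a::{real_inner,complete_space} W"
  assumes say: "sa (pr y)"
  shows "psd (pr (exp (c *\<^sub>R y) * (exp y - 1 - y)))"
    and "psd (pr (exp (c *\<^sub>R y) * (exp (- y) - 1 + y)))"
proof -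
  define h where "h = exp ((c / 2) *\<^sub>R y)"
  have hh: "exp (c *\<^sub>R y) = h * h" by (simp add: h_def exp_scaleR_mult)
  have sah: "sa (pr h)" using say by (simp add: h_def sa_pr_exp sa_scaleR)
  have hy: "h * y = y * h" by (simp add: h_def exp_scaleR_comm_y)
  have he1: "h * exp y = exp y * h"
    using exp_scaleR_comm[of "c/2" y 1] by (simp add: h_def)
  have he2: "h * exp (- y) = exp (- y) * h"
    using exp_scaleR_comm[of "c/2" y "-1"] by (simp add: h_def)
  have g1: "psd (pr (exp y - 1 - y))" by (rule psd_g[OF say])
  have g2: "psd (pr (exp (- y) - 1 - (- y)))" by (rule psd_g) (use say in \<open>simp add: sa_def blinfun.minus_left\<close>)
  have hg1: "h * (exp y - 1 - y) = (exp y - 1 - y) * h" using hy he1 by (simp add: algebra_simps)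
  have "exp (c *\<^sub>R y) * (exp y - 1 - y) = h * (h * (exp y - 1 - y))" by (simp only: hh mult.assoc)
  also have "\<dots> = h * ((exp y - 1 - y) * h)" by (simp only: hg1)
  also have "\<dots> = h * (exp y - 1 - y) * h" by (simp only: mult.assoc)
  finally have "exp (c *\<^sub>R y) * (exp y - 1 - y) = h * (exp y - 1 - y) * h" .
  then show "psd (pr (exp (c *\<^sub>R y) * (exp y - 1 - y)))"
    using psd_congr[OF sah g1] by simp
  have hg2: "h * (exp (- y) - 1 - (- y)) = (exp (- y) - 1 - (- y)) * h" using hy he2 by (simp add: algebra_simps)
  have "exp (c *\<^sub>R y) * (exp (- y) - 1 + y) = h * (h * (exp (- y) - 1 - (- y)))" by (simp only: hh mult.assoc diff_minus_eq_add)
  also have "\<dots> = h * ((exp (- y) - 1 - (- y)) * h)" by (simp only: hg2)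
  also have "\<dots> = h * (exp (- y) - 1 - (- y)) * h" by (simp only: mult.assoc)
  finally have "exp (c *\<^sub>R y) * (exp (- y) - 1 + y) = h * (exp (- y) - 1 - (- y)) * h" .
  then show "psd (pr (exp (c *\<^sub>R y) * (exp (- y) - 1 + y)))"
    using psd_congr[OF sah g2] by simp
qed


lemma op_inv_unique:
  assumes "op_invertible T" "T o\<^sub>L R = id_blinfun"
  shows "op_inv T = R"
proof -
  have "op_inv T o\<^sub>L T = id_blinfun \<and> T o\<^sub>L op_inv T = id_blinfun"
    unfolding op_inv_def using assms(1) unfolding op_invertible_def by (rule someI_ex)
  then have i: "op_inv T (T x) = x" for x by (metis blinfun_apply_blinfun_compose blinfun_apply_id_blinfun)
  have r: "T (R x) = x" for x using assms(2) by (metis blinfun_apply_blinfun_compose blinfun_apply_id_blinfun)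
  show ?thesis by (rule blinfun_eqI) (metis i r)
qed

lemma apply_id_of_comp: "P o\<^sub>L Q = id_blinfun \<Longrightarrow> P (Q x) = x"
  by (metis blinfun_apply_blinfun_compose blinfun_apply_id_blinfun)

lemma exp_scaleR_mult1:
  fixes y :: "'b::{real_normed_algebra_1,banach}"
  shows "exp (a *\<^sub>R y) * exp y = exp ((a + 1) *\<^sub>R y)"
    and "exp (a *\<^sub>R y) * exp (- y) = exp ((a - 1) *\<^sub>R y)"
  using exp_scaleR_mult[of a y 1] exp_scaleR_mult[of a y "-1"] by simp_all

lemma per_j:
  fixes A B :: "'a::{real_inner,complete_space} \<Rightarrow>\<^sub>L 'a" and x0 :: 'a
  assumes spA: "strictly_pos A" and spB: "strictly_pos B" and nt: "x0 \<noteq> 0"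
  defines "Q1 \<equiv> A o\<^sub>L op_inv B o\<^sub>L A"
    and "Q2 \<equiv> A o\<^sub>L op_inv B o\<^sub>L A o\<^sub>L op_inv B o\<^sub>L A"
    and "Q3 \<equiv> B o\<^sub>L op_inv A o\<^sub>L B"
  shows "psd (Q1 - Q2 - gen_rel_entropy (-2) A B)"
    "psd (gen_rel_entropy (-1) A B - (Q1 - Q2))"
    "psd (A - Q1 - gen_rel_entropy (-1) A B)"
    "psd (gen_rel_entropy 0 A B - (A - Q1))"
    "psd (B - A - gen_rel_entropy 0 A B)"
    "psd (gen_rel_entropy 1 A B - (B - A))"
    "psd (Q3 - B - gen_rel_entropy 1 A B)"
    "psd (gen_rel_entropy 2 A B - (Q3 - B))"
proof -
  define a where "a = lg A"
  define H where "H = pr (exp ((1/2) *\<^sub>R a))"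
  define K where "K = pr (exp ((-1/2) *\<^sub>R a))"
  have saA: "sa (pr a)" unfolding a_def by (rule sa_lg[OF spA nt])
  have saH: "sa H" unfolding H_def by (intro sa_pr_exp) (simp add: sa_scaleR saA)
  have saK: "sa K" unfolding K_def by (intro sa_pr_exp) (simp add: sa_scaleR sa_minus saA)
  have HK: "H o\<^sub>L K = id_blinfun" unfolding H_def K_def
    by (simp only: pr_mult[symmetric] exp_scaleR_mult) simp
  have KH: "K o\<^sub>L H = id_blinfun" unfolding H_def K_def
    by (simp only: pr_mult[symmetric] exp_scaleR_mult) simp
  have HH: "H o\<^sub>L H = A" unfolding H_def
    by (simp only: pr_mult[symmetric] exp_scaleR_mult) (simp add: a_def exp_lg[OF spA nt])
  have HKx: "H (K x) = x" and KHx: "K (H x) = x" and HHx: "A x = H (H x)" for x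
    using apply_id_of_comp[OF HK] apply_id_of_comp[OF KH] HH by auto
  have powA: "op_powr A (1/2) = H" "op_powr A (-1/2) = K" "op_powr A (- (1/2)) = K"
    by (simp_all add: op_powr_lg[OF spA nt] H_def K_def a_def)
  obtain Bi where Bi1: "Bi o\<^sub>L B = id_blinfun" and Bi2: "B o\<^sub>L Bi = id_blinfun"
    using spB by (auto simp: strictly_pos_def op_invertible_def)
  define C where "C = K o\<^sub>L B o\<^sub>L K"
  have saB: "sa B" and psdB: "psd B" using sp_facts(1,2)[OF spB nt] by auto
  have spC: "strictly_pos C"
    unfolding strictly_pos_def
  proof (intro conjI)
    show "\<forall>x y. inner (C x) y = inner x (C y)"
      using saB saK by (simp add: C_def sa_def)
    show "\<forall>x. 0 \<le> inner (C x) x"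
      using psd_congr[OF saK psdB] by (simp add: C_def psd_def)
    show "op_invertible C" unfolding op_invertible_def
    proof (intro exI[of _ "H o\<^sub>L Bi o\<^sub>L H"] conjI)
      show "H o\<^sub>L Bi o\<^sub>L H o\<^sub>L C = id_blinfun"
        by (rule blinfun_eqI) (simp add: C_def HKx apply_id_of_comp[OF Bi1])
      show "C o\<^sub>L (H o\<^sub>L Bi o\<^sub>L H) = id_blinfun"
        by (rule blinfun_eqI) (simp add: C_def KHx apply_id_of_comp[OF Bi2])
    qed
  qed
  define y where "y = lg C"
  define E where "E \<nu> = pr (exp (\<nu> *\<^sub>R y))" for \<nu>
  have saY: "sa (pr y)" unfolding y_def by (rule sa_lg[OF spC nt])
  have E1: "E 1 = C" by (simp add: E_def y_def exp_lg[OF spC nt])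
  have EE: "E a' (E b' x) = E (a' + b') x" for a' b' x
  proof -
    have "pr (exp ((a' + b') *\<^sub>R y)) = pr (exp (a' *\<^sub>R y)) o\<^sub>L pr (exp (b' *\<^sub>R y))"
      by (simp only: exp_scaleR_mult[symmetric] pr_mult)
    then show ?thesis by (simp add: E_def)
  qed
  have E0: "E 0 x = x" for x by (simp add: E_def)
  have Bx: "B x = H (E 1 (H x))" for x by (simp add: E1 C_def HKx KHx)
  have CEm: "C o\<^sub>L E (-1) = id_blinfun"
    by (rule blinfun_eqI) (simp add: E1[symmetric] EE E0)
  have invB: "op_inv B = K o\<^sub>L E (-1) o\<^sub>L K"
  proof (rule op_inv_unique)
    show "op_invertible B" using spB by (simp add: strictly_pos_def)
    show "B o\<^sub>L (K o\<^sub>L E (-1) o\<^sub>L K) = id_blinfun"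
      by (rule blinfun_eqI) (simp add: Bx KHx HKx EE E0)
  qed
  have invA: "op_inv A = K o\<^sub>L K"
  proof (rule op_inv_unique)
    show "op_invertible A" using spA by (simp add: strictly_pos_def)
    show "A o\<^sub>L (K o\<^sub>L K) = id_blinfun"
      by (rule blinfun_eqI) (simp add: HHx HKx)
  qed
  have powC: "op_powr C \<nu> = E \<nu>" for \<nu> by (simp add: op_powr_lg[OF spC nt] E_def y_def)
  have logC: "op_log C = pr y" by (simp add: pr_lg[OF spC nt] y_def)
  define \<Phi> where "\<Phi> p = H o\<^sub>L pr p o\<^sub>L H" for p
  have psd\<Phi>: "psd (pr p) \<Longrightarrow> psd (\<Phi> p)" for p unfolding \<Phi>_def by (rule psd_congr[OF saH])
  have \<Phi>diff: "\<Phi> p - \<Phi> q = \<Phi> (p - q)" for p q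
    by (rule blinfun_eqI) (simp add: \<Phi>_def blinfun.diff_left blinfun.diff_right)
  have \<Phi>E: "\<Phi> (exp (\<nu> *\<^sub>R y)) x = H (E \<nu> (H x))" for \<nu> x by (simp add: \<Phi>_def E_def)
  have \<Phi>Ey: "\<Phi> (exp (\<nu> *\<^sub>R y) * y) x = H (E \<nu> (pr y (H x)))" for \<nu> x by (simp add: \<Phi>_def E_def)
  have eA: "A = \<Phi> (exp (0 *\<^sub>R y))" by (rule blinfun_eqI) (simp only: \<Phi>E E0 HHx)
  have eB: "B = \<Phi> (exp (1 *\<^sub>R y))" by (rule blinfun_eqI) (simp only: \<Phi>E Bx)
  have eQ1: "Q1 = \<Phi> (exp ((-1) *\<^sub>R y))"
    by (rule blinfun_eqI, subst \<Phi>E) (simp add: Q1_def invB HHx KHx HKx)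
  have eQ2: "Q2 = \<Phi> (exp ((-2) *\<^sub>R y))"
    by (rule blinfun_eqI, subst \<Phi>E) (simp add: Q2_def invB HHx KHx HKx EE)
  have eQ3: "Q3 = \<Phi> (exp (2 *\<^sub>R y))"
    by (rule blinfun_eqI, subst \<Phi>E) (simp add: Q3_def invA Bx KHx HKx EE)
  have eP: "gen_rel_entropy \<nu> A B = \<Phi> (exp (\<nu> *\<^sub>R y) * y)" for \<nu>
    by (rule blinfun_eqI, subst \<Phi>Ey) (simp add: gen_rel_entropy_def Let_def powA C_def[symmetric] powC logC)
  note w1 = psd_weighted(1)[OF saY] and w2 = psd_weighted(2)[OF saY]
  show "psd (Q1 - Q2 - gen_rel_entropy (-2) A B)"
    unfolding eQ1 eQ2 eP \<Phi>diff
  proof (rule psd\<Phi>)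
    have f: "exp ((-2) *\<^sub>R y) * exp y = exp ((-1) *\<^sub>R y)"
      using exp_scaleR_mult[of "-2" y "1"] by simp
    have "exp ((-1) *\<^sub>R y) - exp ((-2) *\<^sub>R y) - exp ((-2) *\<^sub>R y) * y = exp ((-2) *\<^sub>R y) * (exp y - 1 - y)"
      unfolding right_diff_distrib distrib_left mult_1_right f by (simp add: algebra_simps)
    then show "psd (pr (exp ((-1) *\<^sub>R y) - exp ((-2) *\<^sub>R y) - exp ((-2) *\<^sub>R y) * y))" using w1[of "-2"] by (simp only:)
  qed
  show "psd (gen_rel_entropy (-1) A B - (Q1 - Q2))"
    unfolding eQ1 eQ2 eP \<Phi>diff
  proof (rule psd\<Phi>)
    have f: "exp ((-1) *\<^sub>R y) * exp (- y) = exp ((-2) *\<^sub>R y)"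
      using exp_scaleR_mult[of "-1" y "-1"] by simp
    have "exp ((-1) *\<^sub>R y) * y - (exp ((-1) *\<^sub>R y) - exp ((-2) *\<^sub>R y)) = exp ((-1) *\<^sub>R y) * (exp (- y) - 1 + y)"
      unfolding right_diff_distrib distrib_left mult_1_right f by (simp add: algebra_simps)
    then show "psd (pr (exp ((-1) *\<^sub>R y) * y - (exp ((-1) *\<^sub>R y) - exp ((-2) *\<^sub>R y))))" using w2[of "-1"] by (simp only:)
  qed
  show "psd (A - Q1 - gen_rel_entropy (-1) A B)"
    unfolding eP unfolding eA eQ1 \<Phi>diff
  proof (rule psd\<Phi>)
    have f: "exp ((-1) *\<^sub>R y) * exp y = exp (0 *\<^sub>R y)"
      using exp_scaleR_mult[of "-1" y "1"] by simp
    have "exp (0 *\<^sub>R y) - exp ((-1) *\<^sub>R y) - exp ((-1) *\<^sub>R y) * y = exp ((-1) *\<^sub>R y) * (exp y - 1 - y)"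
      unfolding right_diff_distrib distrib_left mult_1_right f by (simp add: algebra_simps)
    then show "psd (pr (exp (0 *\<^sub>R y) - exp ((-1) *\<^sub>R y) - exp ((-1) *\<^sub>R y) * y))" using w1[of "-1"] by (simp only:)
  qed
  show "psd (gen_rel_entropy 0 A B - (A - Q1))"
    unfolding eP unfolding eA eQ1 \<Phi>diff
  proof (rule psd\<Phi>)
    have f: "exp (0 *\<^sub>R y) * exp (- y) = exp ((-1) *\<^sub>R y)"
      using exp_scaleR_mult[of "0" y "-1"] by simp
    have "exp (0 *\<^sub>R y) * y - (exp (0 *\<^sub>R y) - exp ((-1) *\<^sub>R y)) = exp (0 *\<^sub>R y) * (exp (- y) - 1 + y)"
      unfolding right_diff_distrib distrib_left mult_1_right f by (simp add: algebra_simps)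
    then show "psd (pr (exp (0 *\<^sub>R y) * y - (exp (0 *\<^sub>R y) - exp ((-1) *\<^sub>R y))))" using w2[of "0"] by (simp only:)
  qed
  show "psd (B - A - gen_rel_entropy 0 A B)"
    unfolding eP unfolding eA eB \<Phi>diff
  proof (rule psd\<Phi>)
    have f: "exp (0 *\<^sub>R y) * exp y = exp (1 *\<^sub>R y)"
      using exp_scaleR_mult[of "0" y "1"] by simp
    have "exp (1 *\<^sub>R y) - exp (0 *\<^sub>R y) - exp (0 *\<^sub>R y) * y = exp (0 *\<^sub>R y) * (exp y - 1 - y)"
      unfolding right_diff_distrib distrib_left mult_1_right f by (simp add: algebra_simps)
    then show "psd (pr (exp (1 *\<^sub>R y) - exp (0 *\<^sub>R y) - exp (0 *\<^sub>R y) * y))" using w1[of "0"] by (simp only:)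
  qed
  show "psd (gen_rel_entropy 1 A B - (B - A))"
    unfolding eP unfolding eA eB \<Phi>diff
  proof (rule psd\<Phi>)
    have f: "exp (1 *\<^sub>R y) * exp (- y) = exp (0 *\<^sub>R y)"
      using exp_scaleR_mult[of "1" y "-1"] by simp
    have "exp (1 *\<^sub>R y) * y - (exp (1 *\<^sub>R y) - exp (0 *\<^sub>R y)) = exp (1 *\<^sub>R y) * (exp (- y) - 1 + y)"
      unfolding right_diff_distrib distrib_left mult_1_right f by (simp add: algebra_simps)
    then show "psd (pr (exp (1 *\<^sub>R y) * y - (exp (1 *\<^sub>R y) - exp (0 *\<^sub>R y))))" using w2[of "1"] by (simp only:)
  qed
  show "psd (Q3 - B - gen_rel_entropy 1 A B)"
    unfolding eP unfolding eQ3 eB \<Phi>diff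
  proof (rule psd\<Phi>)
    have f: "exp (1 *\<^sub>R y) * exp y = exp (2 *\<^sub>R y)"
      using exp_scaleR_mult[of "1" y "1"] by simp
    have "exp (2 *\<^sub>R y) - exp (1 *\<^sub>R y) - exp (1 *\<^sub>R y) * y = exp (1 *\<^sub>R y) * (exp y - 1 - y)"
      unfolding right_diff_distrib distrib_left mult_1_right f by (simp add: algebra_simps)
    then show "psd (pr (exp (2 *\<^sub>R y) - exp (1 *\<^sub>R y) - exp (1 *\<^sub>R y) * y))" using w1[of "1"] by (simp only:)
  qed
  show "psd (gen_rel_entropy 2 A B - (Q3 - B))"
    unfolding eP unfolding eQ3 eB \<Phi>diff
  proof (rule psd\<Phi>)
    have f: "exp (2 *\<^sub>R y) * exp (- y) = exp (1 *\<^sub>R y)"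
      using exp_scaleR_mult[of "2" y "-1"] by simp
    have "exp (2 *\<^sub>R y) * y - (exp (2 *\<^sub>R y) - exp (1 *\<^sub>R y)) = exp (2 *\<^sub>R y) * (exp (- y) - 1 + y)"
      unfolding right_diff_distrib distrib_left mult_1_right f by (simp add: algebra_simps)
    then show "psd (pr (exp (2 *\<^sub>R y) * y - (exp (2 *\<^sub>R y) - exp (1 *\<^sub>R y))))" using w2[of "2"] by (simp only:)
  qed
qed


theorem corollary5:
  fixes A B :: "nat \<Rightarrow> ('a::{real_inner,complete_space} \<Rightarrow>\<^sub>L 'a)" and n :: nat
  assumes posA: "\<And>j. j \<in> {1..n} \<Longrightarrow> strictly_pos (A j)"
    and posB: "\<And>j. j \<in> {1..n} \<Longrightarrow> strictly_pos (B j)"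
    and sumA: "(\<Sum>j=1..n. A j) = id_blinfun"
    and sumB: "(\<Sum>j=1..n. B j) = id_blinfun"
  shows
    "op_le (\<Sum>j=1..n. gen_rel_entropy (-2) (A j) (B j))
           ((\<Sum>j=1..n. A j o\<^sub>L op_inv (B j) o\<^sub>L A j)
            - (\<Sum>j=1..n. A j o\<^sub>L op_inv (B j) o\<^sub>L A j o\<^sub>L op_inv (B j) o\<^sub>L A j)) \<and>
     op_le ((\<Sum>j=1..n. A j o\<^sub>L op_inv (B j) o\<^sub>L A j)
            - (\<Sum>j=1..n. A j o\<^sub>L op_inv (B j) o\<^sub>L A j o\<^sub>L op_inv (B j) o\<^sub>L A j))
           (\<Sum>j=1..n. gen_rel_entropy (-1) (A j) (B j)) \<and>
     op_le (\<Sum>j=1..n. gen_rel_entropy (-1) (A j) (B j))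
           (id_blinfun - (\<Sum>j=1..n. A j o\<^sub>L op_inv (B j) o\<^sub>L A j)) \<and>
     op_le (id_blinfun - (\<Sum>j=1..n. A j o\<^sub>L op_inv (B j) o\<^sub>L A j))
           (\<Sum>j=1..n. gen_rel_entropy 0 (A j) (B j)) \<and>
     op_le (\<Sum>j=1..n. gen_rel_entropy 0 (A j) (B j)) 0 \<and>
     op_le 0 (\<Sum>j=1..n. gen_rel_entropy 1 (A j) (B j)) \<and>
     op_le (\<Sum>j=1..n. gen_rel_entropy 1 (A j) (B j))
           ((\<Sum>j=1..n. B j o\<^sub>L op_inv (A j) o\<^sub>L B j) - id_blinfun) \<and>
     op_le ((\<Sum>j=1..n. B j o\<^sub>L op_inv (A j) o\<^sub>L B j) - id_blinfun)
           (\<Sum>j=1..n. gen_rel_entropy 2 (A j) (B j))"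
  proof (cases "\<exists>x0::'a. x0 \<noteq> 0")
  case False
  then have z: "\<And>x::'a. x = 0" by blast
  have le: "op_le X Y" for X Y :: "'a \<Rightarrow>\<^sub>L 'a" unfolding op_le_def by (metis inner_zero_right order_refl z)
  show ?thesis by (simp add: le)
next
  case True
  then obtain x0 :: 'a where nt: "x0 \<noteq> 0" by blast
  define Q1 where "Q1 j = A j o\<^sub>L op_inv (B j) o\<^sub>L A j" for j
  define Q2 where "Q2 j = A j o\<^sub>L op_inv (B j) o\<^sub>L A j o\<^sub>L op_inv (B j) o\<^sub>L A j" for j
  define Q3 where "Q3 j = B j o\<^sub>L op_inv (A j) o\<^sub>L B j" for j
  define P where "P \<nu> j = gen_rel_entropy \<nu> (A j) (B j)" for \<nu> j
  have pj: "psd (Q1 j - Q2 j - P (-2) j) \<and> psd (P (-1) j - (Q1 j - Q2 j)) \<and>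
      psd (A j - Q1 j - P (-1) j) \<and> psd (P 0 j - (A j - Q1 j)) \<and>
      psd (B j - A j - P 0 j) \<and> psd (P 1 j - (B j - A j)) \<and>
      psd (Q3 j - B j - P 1 j) \<and> psd (P 2 j - (Q3 j - B j))" if "j \<in> {1..n}" for j
    using per_j[OF posA[OF that] posB[OF that] nt] unfolding Q1_def Q2_def Q3_def P_def by blast
  have S: "psd (\<Sum>j=1..n. f j)" if "\<And>j. j \<in> {1..n} \<Longrightarrow> psd (f j)" for f
    using psd_sum that by blast
  have id1: "id_blinfun = (\<Sum>j=1..n. A j)" using sumA by simp
  have id2: "id_blinfun = (\<Sum>j=1..n. B j)" using sumB by simp
  have c1: "op_le (\<Sum>j=1..n. P (-2) j) ((\<Sum>j=1..n. Q1 j) - (\<Sum>j=1..n. Q2 j))"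
    unfolding op_le_psd sum_subtractf[symmetric] by (rule S) (use pj in blast)
  have c2: "op_le ((\<Sum>j=1..n. Q1 j) - (\<Sum>j=1..n. Q2 j)) (\<Sum>j=1..n. P (-1) j)"
    unfolding op_le_psd sum_subtractf[symmetric] by (rule S) (use pj in blast)
  have c3: "op_le (\<Sum>j=1..n. P (-1) j) (id_blinfun - (\<Sum>j=1..n. Q1 j))"
    unfolding op_le_psd id1 sum_subtractf[symmetric] by (rule S) (use pj in blast)
  have c4: "op_le (id_blinfun - (\<Sum>j=1..n. Q1 j)) (\<Sum>j=1..n. P 0 j)"
    unfolding op_le_psd id1 sum_subtractf[symmetric] by (rule S) (use pj in blast)
  have c5: "op_le (\<Sum>j=1..n. P 0 j) 0"
  proof -
    have e: "(0::'a \<Rightarrow>\<^sub>L 'a) - (\<Sum>j=1..n. P 0 j) = (\<Sum>j=1..n. B j - A j - P 0 j)"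
      unfolding sum_subtractf sumA sumB by simp
    show ?thesis unfolding op_le_psd e by (rule S) (use pj in blast)
  qed
  have c6: "op_le 0 (\<Sum>j=1..n. P 1 j)"
  proof -
    have e: "(\<Sum>j=1..n. P 1 j) - (0::'a \<Rightarrow>\<^sub>L 'a) = (\<Sum>j=1..n. P 1 j - (B j - A j))"
      unfolding sum_subtractf sumA sumB by simp
    show ?thesis unfolding op_le_psd e by (rule S) (use pj in blast)
  qed
  have c7: "op_le (\<Sum>j=1..n. P 1 j) ((\<Sum>j=1..n. Q3 j) - id_blinfun)"
    unfolding op_le_psd id2 sum_subtractf[symmetric] by (rule S) (use pj in blast)
  have c8: "op_le ((\<Sum>j=1..n. Q3 j) - id_blinfun) (\<Sum>j=1..n. P 2 j)"
    unfolding op_le_psd id2 sum_subtractf[symmetric] by (rule S) (use pj in blast)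
  show ?thesis using c1 c2 c3 c4 c5 c6 c7 c8 by (simp only: Q1_def Q2_def Q3_def P_def)
qed

end
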